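(* For every non-crossing pair partition $\pi$, every $n\ge1$ and every $g\in\mathcal D_n$, $$a_\pi(N)\,\Omega=\phi(a_\pi)\,\Omega+O(1/N),\qquad a_\pi(N)\,v^N_n(g)=v^N_n(a_\pi g)+O(1/N),$$ where $O(1/N)$ denotes a vector of norm at most $C/N$ with $C$ independent of $N$.
   Context: Every non-crossing pair partition $\pi\neq\emptyset$ of $[2n+2]$ decomposes uniquely as $\pi=\{\{1,2m+2\}\}\cup\{B+1:B\in\pi'\}\cup\{B+2m+2:B\in\pi''\}$ with $\pi'$, $\pi''$ non-crossing pair partitions of $[2m]$ and $[2n-2m]$. Define recursively $a_\emptyset=\mathrm{id}$, $a_\pi=a^*a_{\pi'}a\,a_{\pi''}$, and likewise $a_\emptyset(N)=\mathrm{id}$, $a_\pi(N)=a^*(N)a_{\pi'}(N)a(N)a_{\pi''}(N)$. Continuous side: $\mathcal X_{n,m}=\{x_1>\dots>x_m<\dots<x_n\}\subseteq\mathbb{R}^n$, $\mathcal X_n=\bigcup_m\mathcal X_{n,m}$, indicators $\mathbb 1_n,\mathbb 1_{n,m}$; $\mathcal{CV}=\mathbb{C}\Lambda\oplus\bigoplus_{n\ge1}L^2(\mathcal X_n)$, $\phi(T)=\langle T\Lambda,\Lambda\rangle$; $a\Lambda=\mathbb 1_{[0,1]}$, $(ag)(x,\vec x)=\mathbb 1_{[0,1]}(x)\mathbb 1_{n+1}(x,\vec x)g(\vec x)$; $a^*\Lambda=0$, $a^*g=(\int_0^1g)\Lambda$ on $L^2(\mathcal X_1)$, $(a^*g)(\vec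 x)=\mathbb 1_{n,1}(\vec x)\int_0^{x_1}g(x,\vec x)dx+\int_{x_1}^1g(x,\vec x)dx$ on $L^2(\mathcal X_{n+1})$. $\mathcal D_n$: functions in $L^2(\mathcal X_n)$ vanishing outside $[0,1]^n$ and polynomial on each $\mathcal X_{n,m}\cap[0,1]^n$. Discrete side: $\mathcal{DV}$ with orthonormal basis $\{\Omega\}\cup\{e_{i_1}\otimes\dots\otimes e_{i_n}:(i_1,\dots,i_n)\in I_n\}$, $I_n$ the strictly decreasing-then-increasing tuples in $\mathbb{N}_+^n$; $a_i\Omega=e_i$, $a_i(e_{i_1}\otimes\dots\otimes e_{i_n})=\mathbf 1[(i,i_1,\dots,i_n)\in I_{n+1}]e_i\otimes e_{i_1}\otimes\dots\otimes e_{i_n}$; $a(N)=N^{-1/2}\sum_{i\le N}a_i$, $a^*(N)=a(N)^*$; $v^N_n(g)=N^{-n/2}\sum_{(i_1,\dots,i_n)\in I_n\cap[N]^n}g(i_1/N,\dots,i_n/N)e_{i_1}\otimes\dots\otimes e_{i_n}$. *)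

theory Defs
  imports "HOL-Analysis.Analysis"
begin

definition ncpp :: "nat \<Rightarrow> nat set set \<Rightarrow> bool" where
  "ncpp k \<pi> \<longleftrightarrow>
     (\<forall>B\<in>\<pi>. card B = 2) \<and>
     (\<forall>B1\<in>\<pi>. \<forall>B2\<in>\<pi>. B1 \<noteq> B2 \<longrightarrow> B1 \<inter> B2 = {}) \<and>
     \<Union>\<pi> = {1..2*k} \<and>
     (\<forall>B1\<in>\<pi>. \<forall>B2\<in>\<pi>. \<forall>a b c d. a < b \<and> b < c \<and> c < d \<and> B1 = {a, c} \<and> B2 = {b, d} \<longrightarrow> False)"

text \<open>Recursive definition of the word a_pi in an operator pair (ann, cre) = (a, a^*):
  a_emptyset = id, a_pi = a^* a_pi' a a_pi'' for the unique decomposition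
  pi = {{1,2m+2}} + (pi'+1) + (pi''+2m+2).  gen_op n pi A says A is the operator assigned to
  the pair partition pi of [2n].\<close>

inductive gen_op :: "('v \<Rightarrow> 'v) \<Rightarrow> ('v \<Rightarrow> 'v) \<Rightarrow> nat \<Rightarrow> nat set set \<Rightarrow> ('v \<Rightarrow> 'v) \<Rightarrow> bool"
  for ann :: "'v \<Rightarrow> 'v" and cre :: "'v \<Rightarrow> 'v" where
  gen_op_empty: "gen_op ann cre 0 {} id"
| gen_op_step: "gen_op ann cre m \<pi>1 A1 \<Longrightarrow> gen_op ann cre k \<pi>2 A2 \<Longrightarrow>
     gen_op ann cre (m + k + 1)
       ({{1, 2*m+2}} \<union> (\<lambda>B. (\<lambda>x. x + 1) ` B) ` \<pi>1 \<union> (\<lambda>B. (\<lambda>x. x + (2*m+2)) ` B) ` \<pi>2)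
       (cre \<circ> A1 \<circ> ann \<circ> A2)"

definition word_op :: "('v \<Rightarrow> 'v) \<Rightarrow> ('v \<Rightarrow> 'v) \<Rightarrow> nat set set \<Rightarrow> ('v \<Rightarrow> 'v)" where
  "word_op ann cre \<pi> = (THE A. \<exists>n. gen_op ann cre n \<pi> A)"

definition dec_inc_at :: "nat \<Rightarrow> 'a::linorder list \<Rightarrow> bool" where
  "dec_inc_at m xs \<longleftrightarrow> 1 \<le> m \<and> m \<le> length xs \<and>
     (\<forall>i j. i < j \<and> j < m \<longrightarrow> xs ! i > xs ! j) \<and>
     (\<forall>i j. m - 1 \<le> i \<and> i < j \<and> j < length xs \<longrightarrow> xs ! i < xs ! j)"

definition inX :: "real list \<Rightarrow> bool" where
  "inX xs \<longleftrightarrow> (\<exists>m. dec_inc_at m xs)"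

definition inI :: "nat list \<Rightarrow> bool" where
  "inI t \<longleftrightarrow> (\<forall>i\<in>set t. 1 \<le> i) \<and> (\<exists>m. dec_inc_at m t)"

text \<open>A vector of CV = C Lambda + sum_n L^2(X_n) is represented by f :: real list => complex:
  f [] is the Lambda coefficient and f restricted to lists of length n >= 1 is the
  L^2(X_n) component (extended by zero outside X_n).\<close>
type_synonym cvec = "real list \<Rightarrow> complex"

definition Lambda :: cvec where
  "Lambda xs = (if xs = [] then 1 else 0)"

definition ca :: "cvec \<Rightarrow> cvec" where
  "ca f xs = (case xs of [] \<Rightarrow> 0
      | x # ys \<Rightarrow> of_real (indicator {0..1} x * indicator {zs. inX zs} (x # ys)) * f ys)"

definition castar :: "cvec \<Rightarrow> cvec" where
  "castar f xs = (case xs of [] \<Rightarrow> (LINT x:{0..1}|lborel. f [x])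
      | x1 # ys \<Rightarrow>
         (if inX xs then
            (if dec_inc_at 1 xs then (LINT x:{0..x1}|lborel. f (x # xs)) else 0)
            + (LINT x:{x1..1}|lborel. f (x # xs))
          else 0))"

definition phi :: "(cvec \<Rightarrow> cvec) \<Rightarrow> complex" where
  "phi T = T Lambda []"

definition a_cont :: "nat set set \<Rightarrow> cvec \<Rightarrow> cvec" where
  "a_cont \<pi> = word_op ca castar \<pi>"

definition is_poly_fun :: "nat \<Rightarrow> (real list \<Rightarrow> complex) \<Rightarrow> bool" where
  "is_poly_fun n p \<longleftrightarrow> (\<exists>E c. finite (E :: (nat \<Rightarrow> nat) set) \<and>
     (\<forall>xs. length xs = n \<longrightarrow> p xs = (\<Sum>e\<in>E. c e * (\<Prod>i<n. of_real (xs ! i) ^ e i))))"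

definition inD :: "nat \<Rightarrow> cvec \<Rightarrow> bool" where
  "inD n g \<longleftrightarrow>
     (\<forall>xs. g xs \<noteq> 0 \<longrightarrow> length xs = n \<and> inX xs \<and> (\<forall>x\<in>set xs. 0 \<le> x \<and> x \<le> 1)) \<and>
     (\<forall>m\<in>{1..n}. \<exists>p. is_poly_fun n p \<and>
        (\<forall>xs. length xs = n \<and> dec_inc_at m xs \<and> (\<forall>x\<in>set xs. 0 \<le> x \<and> x \<le> 1) \<longrightarrow> g xs = p xs))"

text \<open>A vector of DV is represented by its coefficients u :: nat list => complex w.r.t. the
  orthonormal basis: u [] is the Omega coefficient, u t (t in I_n) the coefficient of
  e_{t_1} (x) ... (x) e_{t_n}.\<close>
type_synonym dvec = "nat list \<Rightarrow> complex"

definition Omega :: dvec where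
  "Omega t = (if t = [] then 1 else 0)"

definition dnorm :: "dvec \<Rightarrow> real" where
  "dnorm u = sqrt (\<Sum>\<^sub>\<infinity>t. (cmod (u t))\<^sup>2)"

text \<open>a_i e_t = [i#t in I] e_{i#t}, and its adjoint a_i^* e_{i#t} = e_t, a_i^* e_s = 0 otherwise.\<close>
definition da_i :: "nat \<Rightarrow> dvec \<Rightarrow> dvec" where
  "da_i i u t = (case t of [] \<Rightarrow> 0 | j # s \<Rightarrow> (if j = i \<and> inI (j # s) then u s else 0))"

definition dastar_i :: "nat \<Rightarrow> dvec \<Rightarrow> dvec" where
  "dastar_i i u s = (if inI (i # s) then u (i # s) else 0)"

definition daN :: "nat \<Rightarrow> dvec \<Rightarrow> dvec" where
  "daN N u t = of_real (1 / sqrt (real N)) * (\<Sum>i\<in>{1..N}. da_i i u t)"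

definition dastarN :: "nat \<Rightarrow> dvec \<Rightarrow> dvec" where
  "dastarN N u t = of_real (1 / sqrt (real N)) * (\<Sum>i\<in>{1..N}. dastar_i i u t)"

definition a_disc :: "nat \<Rightarrow> nat set set \<Rightarrow> dvec \<Rightarrow> dvec" where
  "a_disc N \<pi> = word_op (daN N) (dastarN N) \<pi>"

definition vN :: "nat \<Rightarrow> nat \<Rightarrow> cvec \<Rightarrow> dvec" where
  "vN N n g t = (if length t = n \<and> inI t \<and> (\<forall>i\<in>set t. i \<le> N)
       then of_real (1 / sqrt (real N) ^ n) * g (map (\<lambda>i. real i / real N) t) else 0)"

end

theory Submission
  imports Defs
begin

lemma int_poly_aux:
  fixes c :: "(nat \<Rightarrow> nat) \<Rightarrow> complex" and K :: "(nat \<Rightarrow> nat) \<Rightarrow> complex"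
  assumes "finite E" "a \<le> b"
  and "\<And>x. a < x \<Longrightarrow> x < b \<Longrightarrow> f x = (\<Sum>e\<in>E. c e * of_real x ^ e 0 * K e)"
  shows "(LINT x:{a..b}|lborel. f x) = (\<Sum>e\<in>E. c e * of_real ((b ^ (e 0 + 1) - a ^ (e 0 + 1)) / (e 0 + 1)) * K e)"
proof -
  let ?P = "\<lambda>x. (\<Sum>e\<in>E. c e * of_real x ^ e 0 * K e)"
  let ?F = "\<lambda>x. (\<Sum>e\<in>E. c e * of_real (x ^ (e 0 + 1) / (e 0 + 1)) * K e)"
  have "(LINT x:{a..b}|lborel. f x) = (LBINT x=a..b. f x)"
    using assms(2) by (simp add: interval_integral_Icc)
  also have "\<dots> = (LBINT x : {a<..<b}. f x)"
    using assms(2) by (simp add: interval_integral_Ioo)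
  also have "\<dots> = (LBINT x : {a<..<b}. ?P x)"
    by (rule set_lebesgue_integral_cong) (auto simp: assms(3))
  also have "\<dots> = (LBINT x=a..b. ?P x)"
    using assms(2) by (simp add: interval_integral_Ioo)
  also have "\<dots> = ?F b - ?F a"
  proof (rule interval_integral_FTC_finite)
    show "continuous_on {min a b..max a b} ?P"
      by (intro continuous_intros)
    fix x assume "min a b \<le> x" "x \<le> max a b"
    show "(?F has_vector_derivative ?P x) (at x within {min a b..max a b})"
      unfolding has_vector_derivative_def
      apply (rule has_derivative_eq_rhs)
       apply (rule derivative_eq_intros refl | simp)+
      apply (rule ext)
      apply (simp add: scaleR_conv_of_real sum_distrib_left algebra_simps)
      done
  qed
  also have "\<dots> = (\<Sum>e\<in>E. c e * of_real ((b ^ (e 0 + 1) - a ^ (e 0 + 1)) / (e 0 + 1)) * K e)"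
    by (simp add: sum_subtractf[symmetric] algebra_simps diff_divide_distrib)
  finally show ?thesis .
qed

lemma pow_diff_bounds:
  fixes x y :: real assumes "0 \<le> y" "y \<le> x"
  shows "real (Suc k) * y ^ k * (x - y) \<le> x ^ Suc k - y ^ Suc k"
    and "x ^ Suc k - y ^ Suc k \<le> real (Suc k) * x ^ k * (x - y)"
proof -
  have eq: "x ^ Suc k - y ^ Suc k = (x - y) * (\<Sum>i<Suc k. y ^ (Suc k - Suc i) * x ^ i)"
    by (rule power_diff_sumr2)
  have lo: "y ^ k \<le> y ^ (Suc k - Suc i) * x ^ i" if "i < Suc k" for i
  proof -
    have "y ^ k = y ^ (k - i) * y ^ i" using that by (simp add: power_add[symmetric])
    also have "\<dots> \<le> y ^ (k - i) * x ^ i"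
      by (intro mult_left_mono power_mono) (use assms in auto)
    finally show ?thesis by simp
  qed
  have hi: "y ^ (Suc k - Suc i) * x ^ i \<le> x ^ k" if "i < Suc k" for i
  proof -
    have "y ^ (k - i) \<le> x ^ (k - i)" using assms by (intro power_mono) auto
    hence "y ^ (Suc k - Suc i) * x ^ i \<le> x ^ (k - i) * x ^ i"
      using assms by (intro mult_right_mono) auto
    also have "\<dots> = x ^ k" using that by (simp add: power_add[symmetric])
    finally show ?thesis .
  qed
  have "(\<Sum>i<Suc k. y ^ k) \<le> (\<Sum>i<Suc k. y ^ (Suc k - Suc i) * x ^ i)"
    by (rule sum_mono) (rule lo, simp)
  hence "real (Suc k) * y ^ k \<le> (\<Sum>i<Suc k. y ^ (Suc k - Suc i) * x ^ i)" by simp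
  from mult_left_mono[OF this, of "x - y"] assms show "real (Suc k) * y ^ k * (x - y) \<le> x ^ Suc k - y ^ Suc k"
    unfolding eq by (simp add: algebra_simps)
  have "(\<Sum>i<Suc k. y ^ (Suc k - Suc i) * x ^ i) \<le> (\<Sum>i<Suc k. x ^ k)"
    by (rule sum_mono) (rule hi, simp)
  hence "(\<Sum>i<Suc k. y ^ (Suc k - Suc i) * x ^ i) \<le> real (Suc k) * x ^ k" by simp
  from mult_left_mono[OF this, of "x - y"] assms show "x ^ Suc k - y ^ Suc k \<le> real (Suc k) * x ^ k * (x - y)"
    unfolding eq by (simp add: algebra_simps)
qed

lemma riemann_int_aux:
  fixes a b :: nat assumes "a \<le> b"
  shows "0 \<le> (\<Sum>i\<in>{a<..b}. real i ^ k) - (real b ^ Suc k - real a ^ Suc k) / real (Suc k)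
       \<and> (\<Sum>i\<in>{a<..b}. real i ^ k) - (real b ^ Suc k - real a ^ Suc k) / real (Suc k) \<le> real b ^ k - real a ^ k"
  using assms
proof (induction b rule: dec_induct)
  case base
  then show ?case by simp
next
  case (step b)
  have split: "{a<..Suc b} = insert (Suc b) {a<..b}" using step.hyps by auto
  have s: "(\<Sum>i\<in>{a<..Suc b}. real i ^ k) = real (Suc b) ^ k + (\<Sum>i\<in>{a<..b}. real i ^ k)"
    unfolding split by (subst sum.insert) auto
  have b1: "real (Suc k) * real b ^ k \<le> real (Suc b) ^ Suc k - real b ^ Suc k"
    using pow_diff_bounds(1)[of "real b" "real (Suc b)" k] by simp
  have b2: "real (Suc b) ^ Suc k - real b ^ Suc k \<le> real (Suc k) * real (Suc b) ^ k"
    using pow_diff_bounds(2)[of "real b" "real (Suc b)" k] by simp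
  have e: "(real (Suc b) ^ Suc k - real a ^ Suc k) / real (Suc k)
     = (real b ^ Suc k - real a ^ Suc k) / real (Suc k) + (real (Suc b) ^ Suc k - real b ^ Suc k) / real (Suc k)"
    by (simp add: diff_divide_distrib)
  have c1: "(real (Suc b) ^ Suc k - real b ^ Suc k) / real (Suc k) \<le> real (Suc b) ^ k"
    using b2 by (simp add: divide_le_eq mult.commute del: of_nat_Suc)
  have c2: "real b ^ k \<le> (real (Suc b) ^ Suc k - real b ^ Suc k) / real (Suc k)"
    using b1 by (simp add: le_divide_eq mult.commute del: of_nat_Suc)
  show ?case using step.IH c1 c2 unfolding s e by linarith
qed

lemma riemann_mono:
  fixes a b N :: nat assumes "a \<le> b" "b \<le> N" "1 \<le> N"
  shows "\<bar>(\<Sum>i\<in>{a<..b}. (real i / real N) ^ k / real N)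
          - ((real b / real N) ^ Suc k - (real a / real N) ^ Suc k) / real (Suc k)\<bar> \<le> 1 / real N"
proof -
  let ?S = "(\<Sum>i\<in>{a<..b}. real i ^ k)" and ?T = "(real b ^ Suc k - real a ^ Suc k) / real (Suc k)"
  have Np: "real N > 0" using assms by simp
  have t1: "(real i / real N) ^ k / real N = real i ^ k / real N ^ Suc k" for i
    using Np by (simp add: power_divide)
  have t2: "((real b / real N) ^ Suc k - (real a / real N) ^ Suc k) / real (Suc k) = ?T / real N ^ Suc k"
    by (simp add: power_divide diff_divide_distrib mult.commute)
  have eq: "(\<Sum>i\<in>{a<..b}. (real i / real N) ^ k / real N)
          - ((real b / real N) ^ Suc k - (real a / real N) ^ Suc k) / real (Suc k) = (?S - ?T) / real N ^ Suc k"
    unfolding t1 t2 by (simp add: sum_divide_distrib[symmetric] diff_divide_distrib)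
  have "0 \<le> ?S - ?T" "?S - ?T \<le> real b ^ k - real a ^ k" using riemann_int_aux[OF assms(1)] by auto
  moreover have "real b ^ k - real a ^ k \<le> real N ^ k"
  proof -
    have "real b ^ k \<le> real N ^ k" using assms by (intro power_mono) auto
    moreover have "0 \<le> real a ^ k" by simp
    ultimately show ?thesis by linarith
  qed
  ultimately have "\<bar>?S - ?T\<bar> \<le> real N ^ k" by simp
  hence "\<bar>?S - ?T\<bar> / real N ^ Suc k \<le> real N ^ k / real N ^ Suc k"
    using Np by (intro divide_right_mono) auto
  also have "\<dots> = 1 / real N" using Np by simp
  finally show ?thesis unfolding eq using Np by simp
qed

lemma poly_gen:
  fixes d :: "'j \<Rightarrow> complex" and f :: "'j \<Rightarrow> nat \<Rightarrow> nat"
  assumes "finite J"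
    and "\<And>xs. length xs = n \<Longrightarrow> p xs = (\<Sum>j\<in>J. d j * (\<Prod>i<n. of_real (xs ! i) ^ f j i))"
  shows "is_poly_fun n p"
  unfolding is_poly_fun_def
proof (intro exI conjI allI impI)
  show "finite (f ` J)" using assms(1) by simp
  fix xs :: "real list" assume "length xs = n"
  have "p xs = (\<Sum>j\<in>J. d j * (\<Prod>i<n. of_real (xs ! i) ^ f j i))" using assms(2)[OF \<open>length xs = n\<close>] .
  also have "\<dots> = (\<Sum>e\<in>f ` J. \<Sum>j\<in>{j. j \<in> J \<and> f j = e}. d j * (\<Prod>i<n. of_real (xs ! i) ^ f j i))"
    by (rule sum.image_gen[OF assms(1)])
  also have "\<dots> = (\<Sum>e\<in>f ` J. (\<Sum>j\<in>{j. j \<in> J \<and> f j = e}. d j) * (\<Prod>i<n. of_real (xs ! i) ^ e i))"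
    by (intro sum.cong refl) (auto simp: sum_distrib_right)
  finally show "p xs = (\<Sum>e\<in>f ` J. (\<Sum>j\<in>{j. j \<in> J \<and> f j = e}. d j) * (\<Prod>i<n. of_real (xs ! i) ^ e i))" .
qed

lemma poly_add:
  assumes "is_poly_fun n p" "is_poly_fun n q"
  shows "is_poly_fun n (\<lambda>xs. p xs + q xs)"
proof -
  obtain E c where E: "finite E" "\<And>xs. length xs = n \<Longrightarrow> p xs = (\<Sum>e\<in>E. c e * (\<Prod>i<n. of_real (xs ! i) ^ e i))"
    using assms(1) unfolding is_poly_fun_def by blast
  obtain F d where F: "finite F" "\<And>xs. length xs = n \<Longrightarrow> q xs = (\<Sum>e\<in>F. d e * (\<Prod>i<n. of_real (xs ! i) ^ e i))"
    using assms(2) unfolding is_poly_fun_def by blast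
  show ?thesis
    apply (rule poly_gen[where J="E <+> F" and d="case_sum c d" and f="case_sum id id"])
    using E F by (auto simp: sum.Plus o_def)
qed

lemma poly_scale:
  assumes "is_poly_fun n p"
  shows "is_poly_fun n (\<lambda>xs. a * p xs)"
proof -
  obtain E c where E: "finite E" "\<And>xs. length xs = n \<Longrightarrow> p xs = (\<Sum>e\<in>E. c e * (\<Prod>i<n. of_real (xs ! i) ^ e i))"
    using assms(1) unfolding is_poly_fun_def by blast
  show ?thesis
    apply (rule poly_gen[where J="E" and d="\<lambda>e. a * c e" and f="id"])
    using E by (auto simp: sum_distrib_left mult.assoc)
qed

lemma poly_const: "is_poly_fun n (\<lambda>xs. a)"
  by (rule poly_gen[where J="{()}" and d="\<lambda>_. a" and f="\<lambda>_ _. 0"]) auto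

lemma poly_tl:
  assumes "is_poly_fun n p"
  shows "is_poly_fun (Suc n) (\<lambda>xs. p (tl xs))"
proof -
  obtain E c where E: "finite E" "\<And>xs. length xs = n \<Longrightarrow> p xs = (\<Sum>e\<in>E. c e * (\<Prod>i<n. of_real (xs ! i) ^ e i))"
    using assms(1) unfolding is_poly_fun_def by blast
  show ?thesis
  proof (rule poly_gen[where J="E" and d="c" and f="\<lambda>e i. if i = 0 then 0 else e (i - 1)"])
    fix xs :: "real list" assume l: "length xs = Suc n"
    then obtain x ys where xs: "xs = x # ys" by (cases xs) auto
    show "p (tl xs) = (\<Sum>j\<in>E. c j * (\<Prod>i<Suc n. of_real (xs ! i) ^ (if i = 0 then 0 else j (i - 1))))"
      using l E(2)[of ys] unfolding xs by (subst prod.lessThan_Suc_shift) simp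
  qed (use E in auto)
qed

definition Kmon :: "nat \<Rightarrow> (nat \<Rightarrow> nat) \<Rightarrow> real list \<Rightarrow> complex" where
  "Kmon n e y = (\<Prod>i<n. of_real (y ! i) ^ e (Suc i))"

definition Iint :: "(nat \<Rightarrow> nat) set \<Rightarrow> ((nat \<Rightarrow> nat) \<Rightarrow> complex) \<Rightarrow> nat \<Rightarrow> real \<Rightarrow> real \<Rightarrow> real list \<Rightarrow> complex" where
  "Iint E c n a b y = (\<Sum>e\<in>E. c e * of_real ((b ^ (e 0 + 1) - a ^ (e 0 + 1)) / real (e 0 + 1)) * Kmon n e y)"

lemma poly_Kmon: "is_poly_fun n (Kmon n e)"
  by (rule poly_gen[where J="{()}" and d="\<lambda>_. 1" and f="\<lambda>_ i. e (Suc i)"]) (auto simp: Kmon_def)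

lemma poly_lower:
  assumes "finite E" "1 \<le> n"
  shows "is_poly_fun n (\<lambda>y. Iint E c n 0 (y ! 0) y)"
proof -
  obtain n' where n: "n = Suc n'" using assms(2) by (cases n) auto
  show ?thesis
  proof (rule poly_gen[where J="E" and d="\<lambda>e. c e / of_nat (e 0 + 1)"
        and f="\<lambda>e i. if i = 0 then e 0 + 1 + e 1 else e (Suc i)"])
    fix y :: "real list" assume "length y = n"
    show "Iint E c n 0 (y ! 0) y = (\<Sum>j\<in>E. c j / of_nat (j 0 + 1) *
         (\<Prod>i<n. of_real (y ! i) ^ (if i = 0 then j 0 + 1 + j 1 else j (Suc i))))"
      unfolding Iint_def Kmon_def n
      by (intro sum.cong refl, subst (1 2) prod.lessThan_Suc_shift) (simp add: power_add field_simps)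
  qed (use assms in auto)
qed

lemma poly_upper:
  assumes "finite E" "1 \<le> n"
  shows "is_poly_fun n (\<lambda>y. Iint E c n (y ! 0) 1 y)"
proof -
  have eq: "Iint E c n (y ! 0) 1 y = (\<Sum>e\<in>E. c e / of_nat (e 0 + 1) * Kmon n e y) + (-1) * Iint E c n 0 (y ! 0) y" for y
    unfolding Iint_def
    apply (simp only: mult_minus1 flip: diff_conv_add_uminus)
    apply (subst sum_subtractf[symmetric])
    apply (intro sum.cong refl)
    apply (simp add: diff_divide_distrib algebra_simps)
    done
  have p1: "is_poly_fun n (\<lambda>y. (\<Sum>e\<in>E. c e / of_nat (e 0 + 1) * Kmon n e y))"
    by (rule poly_gen[where J="E" and d="\<lambda>e. c e / of_nat (e 0 + 1)" and f="\<lambda>e i. e (Suc i)"])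
       (use assms in \<open>auto simp: Kmon_def\<close>)
  show ?thesis unfolding eq
    by (intro poly_add p1 poly_scale poly_lower assms)
qed

definition Ppoly :: "(nat \<Rightarrow> nat) set \<Rightarrow> ((nat \<Rightarrow> nat) \<Rightarrow> complex) \<Rightarrow> nat \<Rightarrow> real list \<Rightarrow> complex" where
  "Ppoly E c m z = (\<Sum>e\<in>E. c e * (\<Prod>i<m. of_real (z ! i) ^ e i))"

lemma Ppoly_cons: "Ppoly E c (Suc n) (x # y) = (\<Sum>e\<in>E. c e * of_real x ^ e 0 * Kmon n e y)"
  unfolding Ppoly_def Kmon_def by (intro sum.cong refl, subst prod.lessThan_Suc_shift) (simp add: mult.assoc)

lemma Kmon_bound:
  assumes "length y = n" "\<forall>v\<in>set y. 0 \<le> v \<and> v \<le> 1"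
  shows "cmod (Kmon n e y) \<le> 1"
proof -
  have "cmod (Kmon n e y) = (\<Prod>i<n. cmod (of_real (y ! i) ^ e (Suc i)))"
    unfolding Kmon_def by (simp add: prod_norm)
  also have "\<dots> \<le> 1"
  proof (rule prod_le_1)
    fix i assume "i \<in> {..<n}"
    hence "y ! i \<in> set y" using assms(1) by auto
    hence "0 \<le> y ! i" "y ! i \<le> 1" using assms(2) by auto
    thus "0 \<le> cmod (of_real (y ! i) ^ e (Suc i)) \<and> cmod (of_real (y ! i) ^ e (Suc i)) \<le> 1"
      by (simp add: norm_power power_le_one)
  qed
  finally show ?thesis .
qed

lemma Ppoly_bound:
  assumes "length z = m" "\<forall>v\<in>set z. 0 \<le> v \<and> v \<le> 1"
  shows "cmod (Ppoly E c m z) \<le> (\<Sum>e\<in>E. cmod (c e))"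
proof -
  have "cmod (Ppoly E c m z) \<le> (\<Sum>e\<in>E. cmod (c e * (\<Prod>i<m. of_real (z ! i) ^ e i)))"
    unfolding Ppoly_def by (rule norm_sum)
  also have "\<dots> \<le> (\<Sum>e\<in>E. cmod (c e))"
  proof (rule sum_mono)
    fix e
    have "cmod (\<Prod>i<m. of_real (z ! i) ^ e i) = (\<Prod>i<m. cmod (of_real (z ! i) ^ e i))"
      by (simp add: prod_norm)
    also have "\<dots> \<le> 1"
    proof (rule prod_le_1)
      fix i assume "i \<in> {..<m}"
      hence "z ! i \<in> set z" using assms(1) by auto
      hence "0 \<le> z ! i" "z ! i \<le> 1" using assms(2) by auto
      thus "0 \<le> cmod (of_real (z ! i) ^ e i) \<and> cmod (of_real (z ! i) ^ e i) \<le> 1"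
        by (simp add: norm_power power_le_one)
    qed
    finally have "cmod (\<Prod>i<m. of_real (z ! i) ^ e i) \<le> 1" .
    thus "cmod (c e * (\<Prod>i<m. of_real (z ! i) ^ e i)) \<le> cmod (c e)"
      by (simp add: norm_mult mult_left_le)
  qed
  finally show ?thesis .
qed

lemma int_Iint:
  assumes "finite E" "a \<le> b" "\<And>x. a < x \<Longrightarrow> x < b \<Longrightarrow> f x = Ppoly E c (Suc n) (x # y)"
  shows "(LINT x:{a..b}|lborel. f x) = Iint E c n a b y"
  unfolding Iint_def
  by (rule int_poly_aux[OF assms(1,2)]) (simp add: assms(3) Ppoly_cons)

lemma riemann_poly:
  assumes fin: "finite E" and ab: "a \<le> b" "b \<le> N" "1 \<le> N"
    and y: "length y = n" "\<forall>v\<in>set y. 0 \<le> v \<and> v \<le> 1"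
  shows "cmod ((\<Sum>i\<in>{a<..b}. Ppoly E c (Suc n) ((real i / real N) # y)) / of_nat N
           - Iint E c n (real a / real N) (real b / real N) y) \<le> (\<Sum>e\<in>E. cmod (c e)) / real N"
proof -
  define R where "R e = (\<Sum>i\<in>{a<..b}. (real i / real N) ^ e 0 / real N)" for e :: "nat \<Rightarrow> nat"
  define T where "T e = ((real b / real N) ^ Suc (e 0) - (real a / real N) ^ Suc (e 0)) / real (Suc (e 0))" for e :: "nat \<Rightarrow> nat"
  have RT: "\<bar>R e - T e\<bar> \<le> 1 / real N" for e :: "nat \<Rightarrow> nat"
    unfolding R_def T_def by (rule riemann_mono[OF ab])
  have A: "(\<Sum>i\<in>{a<..b}. Ppoly E c (Suc n) ((real i / real N) # y)) / of_nat N
      = (\<Sum>e\<in>E. c e * Kmon n e y * of_real (R e))"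
    unfolding Ppoly_cons R_def
    by (subst sum.swap) (simp add: sum_divide_distrib sum_distrib_left mult_ac)
  have B: "Iint E c n (real a / real N) (real b / real N) y = (\<Sum>e\<in>E. c e * Kmon n e y * of_real (T e))"
    unfolding Iint_def T_def by (simp add: mult_ac)
  have eq: "(\<Sum>i\<in>{a<..b}. Ppoly E c (Suc n) ((real i / real N) # y)) / of_nat N
           - Iint E c n (real a / real N) (real b / real N) y
         = (\<Sum>e\<in>E. c e * Kmon n e y * of_real (R e - T e))"
    unfolding A B by (simp add: sum_subtractf[symmetric] algebra_simps)
  have "cmod (\<Sum>e\<in>E. c e * Kmon n e y * of_real (R e - T e)) \<le> (\<Sum>e\<in>E. cmod (c e * Kmon n e y * of_real (R e - T e)))"
    by (rule norm_sum)
  also have "\<dots> \<le> (\<Sum>e\<in>E. cmod (c e) * (1 / real N))"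
  proof (rule sum_mono)
    fix e
    have "cmod (c e * Kmon n e y * of_real (R e - T e)) = cmod (c e) * cmod (Kmon n e y) * \<bar>R e - T e\<bar>"
      by (simp add: norm_mult del: of_real_diff)
    also have "\<dots> \<le> cmod (c e) * 1 * (1 / real N)"
      by (intro mult_mono Kmon_bound[OF y] RT) auto
    finally show "cmod (c e * Kmon n e y * of_real (R e - T e)) \<le> cmod (c e) * (1 / real N)" by simp
  qed
  also have "\<dots> = (\<Sum>e\<in>E. cmod (c e)) / real N" by (simp add: sum_divide_distrib)
  finally show ?thesis unfolding eq .
qed

lemma dia_map:
  fixes f :: "'a::linorder \<Rightarrow> 'b::linorder"
  assumes "strict_mono f"
  shows "dec_inc_at m (map f xs) \<longleftrightarrow> dec_inc_at m xs"
  unfolding dec_inc_at_def using strict_mono_less[OF assms] by auto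

lemma dia_single: "dec_inc_at m [x] \<longleftrightarrow> m = 1"
  unfolding dec_inc_at_def by auto

lemma dia_cons_D:
  assumes "dec_inc_at m (x # xs)" "xs \<noteq> []"
  shows "(m = 1 \<and> x < hd xs \<and> dec_inc_at 1 xs) \<or> (2 \<le> m \<and> hd xs < x \<and> dec_inc_at (m - 1) xs)"
proof -
  from assms(1) have m: "1 \<le> m" "m \<le> Suc (length xs)"
    and dec: "\<And>i j. i < j \<Longrightarrow> j < m \<Longrightarrow> (x # xs) ! i > (x # xs) ! j"
    and inc: "\<And>i j. m - 1 \<le> i \<Longrightarrow> i < j \<Longrightarrow> j < Suc (length xs) \<Longrightarrow> (x # xs) ! i < (x # xs) ! j"
    unfolding dec_inc_at_def by auto
  have hd: "hd xs = xs ! 0" using assms(2) by (simp add: hd_conv_nth)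
  show ?thesis
  proof (cases "m = 1")
    case True
    have "x < hd xs" using inc[of 0 1] True assms(2) hd by simp
    moreover have "dec_inc_at 1 xs" unfolding dec_inc_at_def
    proof (intro conjI allI impI)
      show "1 \<le> length xs" using assms(2) by (cases xs) auto
      fix i j
      show "1 - 1 \<le> i \<and> i < j \<and> j < length xs \<Longrightarrow> xs ! i < xs ! j"
        using inc[of "Suc i" "Suc j"] True by auto
    qed auto
    ultimately show ?thesis using True by simp
  next
    case False
    hence m2: "2 \<le> m" using m by simp
    have "hd xs < x" using dec[of 0 1] m2 hd by simp
    moreover have "dec_inc_at (m - 1) xs" unfolding dec_inc_at_def
    proof (intro conjI allI impI)
      show "1 \<le> m - 1" "m - 1 \<le> length xs" using m m2 by auto
      fix i j
      show "i < j \<and> j < m - 1 \<Longrightarrow> xs ! j < xs ! i" using dec[of "Suc i" "Suc j"] by auto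
      show "m - 1 - 1 \<le> i \<and> i < j \<and> j < length xs \<Longrightarrow> xs ! i < xs ! j"
        using inc[of "Suc i" "Suc j"] m2 by auto
    qed
    ultimately show ?thesis using m2 by simp
  qed
qed

lemma dia_cons_I1:
  assumes "dec_inc_at 1 xs" "xs \<noteq> []" "x < hd xs"
  shows "dec_inc_at 1 (x # xs)"
proof -
  from assms(1) have inc: "\<And>i j. i < j \<Longrightarrow> j < length xs \<Longrightarrow> xs ! i < xs ! j"
    unfolding dec_inc_at_def by auto
  have hd: "hd xs = xs ! 0" using assms(2) by (simp add: hd_conv_nth)
  have x0: "x < xs ! j" if "j < length xs" for j
  proof (cases j)
    case 0 then show ?thesis using assms(3) hd by simp
  next
    case (Suc k) then show ?thesis using inc[of 0 j] that assms(3) hd by simp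
  qed
  show ?thesis unfolding dec_inc_at_def
  proof (intro conjI allI impI)
    fix i j assume a: "1 - 1 \<le> i \<and> i < j \<and> j < length (x # xs)"
    then obtain j' where j: "j = Suc j'" by (cases j) auto
    show "(x # xs) ! i < (x # xs) ! j"
    proof (cases i)
      case 0 then show ?thesis using j a x0 by simp
    next
      case (Suc i') then show ?thesis using j a inc by simp
    qed
  qed auto
qed

lemma dia_cons_I2:
  assumes "dec_inc_at m xs" "hd xs < x"
  shows "dec_inc_at (Suc m) (x # xs)"
proof -
  from assms(1) have m: "1 \<le> m" "m \<le> length xs"
    and dec: "\<And>i j. i < j \<Longrightarrow> j < m \<Longrightarrow> xs ! i > xs ! j"
    and inc: "\<And>i j. m - 1 \<le> i \<Longrightarrow> i < j \<Longrightarrow> j < length xs \<Longrightarrow> xs ! i < xs ! j"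
    unfolding dec_inc_at_def by auto
  have ne: "xs \<noteq> []" using m by auto
  have hd: "hd xs = xs ! 0" using ne by (simp add: hd_conv_nth)
  have x0: "xs ! j < x" if "j < m" for j
  proof (cases j)
    case 0 then show ?thesis using assms(2) hd by simp
  next
    case (Suc k) then show ?thesis using dec[of 0 j] that assms(2) hd by simp
  qed
  show ?thesis unfolding dec_inc_at_def
  proof (intro conjI allI impI)
    show "1 \<le> Suc m" "Suc m \<le> length (x # xs)" using m by auto
    fix i j
    assume a: "i < j \<and> j < Suc m"
    then obtain j' where j: "j = Suc j'" by (cases j) auto
    show "(x # xs) ! j < (x # xs) ! i"
    proof (cases i)
      case 0 then show ?thesis using j a x0 by simp
    next
      case (Suc i') then show ?thesis using j a dec by simp
    qed
  next
    fix i j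
    assume a: "Suc m - 1 \<le> i \<and> i < j \<and> j < length (x # xs)"
    then obtain i' j' where i: "i = Suc i'" and j: "j = Suc j'" using m by (cases i; cases j) auto
    have "m - 1 \<le> i'" using a i by linarith
    thus "(x # xs) ! i < (x # xs) ! j" using a inc[of i' j'] i j by simp
  qed
qed

lemma dia_unique:
  assumes "dec_inc_at m xs" "dec_inc_at m' xs"
  shows "m = m'"
proof (rule ccontr)
  assume "m \<noteq> m'"
  then consider "m < m'" | "m' < m" by linarith
  thus False
  proof cases
    case 1
    have "xs ! (m - 1) > xs ! m" using assms(2) 1 assms(1) unfolding dec_inc_at_def by auto
    moreover have "xs ! (m - 1) < xs ! m" using assms(2) 1 assms(1) unfolding dec_inc_at_def by auto
    ultimately show False by simp
  next
    case 2
    have "xs ! (m' - 1) > xs ! m'" using assms(1) 2 assms(2) unfolding dec_inc_at_def by auto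
    moreover have "xs ! (m' - 1) < xs ! m'" using assms(1) 2 assms(2) unfolding dec_inc_at_def by auto
    ultimately show False by simp
  qed
qed

definition fsupp :: "dvec \<Rightarrow> bool" where
  "fsupp u \<longleftrightarrow> finite {t. u t \<noteq> 0}"

lemma dnorm_L2:
  assumes "finite S" "\<And>t. u t \<noteq> 0 \<Longrightarrow> t \<in> S"
  shows "dnorm u = L2_set (\<lambda>t. cmod (u t)) S"
proof -
  have "(\<Sum>\<^sub>\<infinity>t. (cmod (u t))\<^sup>2) = (\<Sum>\<^sub>\<infinity>t\<in>S. (cmod (u t))\<^sup>2)"
    by (rule infsum_cong_neutral) (use assms(2) in auto)
  also have "\<dots> = (\<Sum>t\<in>S. (cmod (u t))\<^sup>2)" using assms(1) by simp
  finally show ?thesis unfolding dnorm_def L2_set_def by simp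
qed

lemma dnorm_fsupp: "fsupp u \<Longrightarrow> dnorm u = L2_set (\<lambda>t. cmod (u t)) {t. u t \<noteq> 0}"
  unfolding fsupp_def by (rule dnorm_L2) auto

lemma dnorm_bound:
  assumes "finite S" "\<And>t. u t \<noteq> 0 \<Longrightarrow> t \<in> S" "\<And>t. t \<in> S \<Longrightarrow> cmod (u t) \<le> B" "0 \<le> B"
  shows "dnorm u \<le> sqrt (real (card S)) * B"
proof -
  have "(\<Sum>t\<in>S. (cmod (u t))\<^sup>2) \<le> (\<Sum>t\<in>S. B\<^sup>2)"
    by (intro sum_mono power_mono assms(3)) auto
  hence "sqrt (\<Sum>t\<in>S. (cmod (u t))\<^sup>2) \<le> sqrt (real (card S) * B\<^sup>2)" by simp
  also have "\<dots> = sqrt (real (card S)) * B" using assms(4) by (simp add: real_sqrt_mult)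
  finally have "sqrt (\<Sum>t\<in>S. (cmod (u t))\<^sup>2) \<le> sqrt (real (card S)) * B" .
  moreover have "dnorm u = sqrt (\<Sum>t\<in>S. (cmod (u t))\<^sup>2)"
    using dnorm_L2[OF assms(1,2)] unfolding L2_set_def by simp
  ultimately show ?thesis by simp
qed

lemma fsupp_add: "fsupp u \<Longrightarrow> fsupp v \<Longrightarrow> fsupp (\<lambda>t. u t + v t)"
  unfolding fsupp_def by (rule finite_subset[of _ "{t. u t \<noteq> 0} \<union> {t. v t \<noteq> 0}"]) auto

lemma fsupp_diff: "fsupp u \<Longrightarrow> fsupp v \<Longrightarrow> fsupp (\<lambda>t. u t - v t)"
  unfolding fsupp_def by (rule finite_subset[of _ "{t. u t \<noteq> 0} \<union> {t. v t \<noteq> 0}"]) auto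

lemma dnorm_triangle:
  assumes "fsupp u" "fsupp v"
  shows "dnorm (\<lambda>t. u t + v t) \<le> dnorm u + dnorm v"
proof -
  let ?S = "{t. u t \<noteq> 0} \<union> {t. v t \<noteq> 0}"
  have fin: "finite ?S" using assms unfolding fsupp_def by auto
  have "dnorm (\<lambda>t. u t + v t) = L2_set (\<lambda>t. cmod (u t + v t)) ?S"
    by (rule dnorm_L2[OF fin]) auto
  also have "\<dots> \<le> L2_set (\<lambda>t. cmod (u t) + cmod (v t)) ?S"
    by (rule L2_set_mono) (auto intro: norm_triangle_ineq)
  also have "\<dots> \<le> L2_set (\<lambda>t. cmod (u t)) ?S + L2_set (\<lambda>t. cmod (v t)) ?S"
    by (rule L2_set_triangle_ineq)
  also have "L2_set (\<lambda>t. cmod (u t)) ?S = dnorm u" by (rule dnorm_L2[OF fin, symmetric]) auto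
  also have "L2_set (\<lambda>t. cmod (v t)) ?S = dnorm v" by (rule dnorm_L2[OF fin, symmetric]) auto
  finally show ?thesis .
qed

lemma dnorm_cong: "(\<And>t. u t = v t) \<Longrightarrow> dnorm u = dnorm v"
  by (metis ext)

lemma daN_cons: "daN N u (j # s) = of_real (1 / sqrt (real N)) * (if 1 \<le> j \<and> j \<le> N \<and> inI (j # s) then u s else 0)"
proof -
  have "(\<Sum>i\<in>{1..N}. da_i i u (j # s)) = (\<Sum>i\<in>{1..N}. if i = j then (if inI (j # s) then u s else 0) else 0)"
    unfolding da_i_def by (intro sum.cong) auto
  also have "\<dots> = (if 1 \<le> j \<and> j \<le> N \<and> inI (j # s) then u s else 0)"
    by (subst sum.delta) auto
  finally show ?thesis unfolding daN_def by simp
qed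

lemma daN_nil: "daN N u [] = 0"
  unfolding daN_def da_i_def by simp

lemma daN_fsupp:
  assumes "fsupp u" shows "fsupp (daN N u)"
proof -
  have "{t. daN N u t \<noteq> 0} \<subseteq> (\<lambda>(j, s). j # s) ` ({1..N} \<times> {t. u t \<noteq> 0})"
  proof
    fix t assume "t \<in> {t. daN N u t \<noteq> 0}"
    then show "t \<in> (\<lambda>(j, s). j # s) ` ({1..N} \<times> {t. u t \<noteq> 0})"
      by (cases t) (auto simp: daN_nil daN_cons split: if_splits)
  qed
  moreover have "finite ((\<lambda>(j, s). j # s) ` ({1..N} \<times> {t. u t \<noteq> 0}))"
    using assms unfolding fsupp_def by auto
  ultimately show ?thesis unfolding fsupp_def by (rule finite_subset)
qed

lemma daN_norm:
  assumes "fsupp u" "1 \<le> N"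
  shows "dnorm (daN N u) \<le> dnorm u"
proof -
  let ?S = "{t. u t \<noteq> 0}"
  let ?T = "(\<lambda>(j, s). j # s) ` ({1..N} \<times> ?S)"
  have finS: "finite ?S" using assms(1) unfolding fsupp_def .
  have finT: "finite ?T" using finS by auto
  have sub: "daN N u t \<noteq> 0 \<Longrightarrow> t \<in> ?T" for t
    by (cases t) (auto simp: daN_nil daN_cons split: if_splits)
  have inj: "inj_on (\<lambda>(j, s). j # s) ({1..N} \<times> ?S)" by (auto simp: inj_on_def)
  have Np: "real N > 0" using assms(2) by simp
  have "(\<Sum>t\<in>?T. (cmod (daN N u t))\<^sup>2) = (\<Sum>(j, s)\<in>{1..N} \<times> ?S. (cmod (daN N u (j # s)))\<^sup>2)"
    by (subst sum.reindex[OF inj]) (simp add: case_prod_beta)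
  also have "\<dots> \<le> (\<Sum>(j, s)\<in>{1..N} \<times> ?S. (cmod (u s))\<^sup>2 / real N)"
  proof (rule sum_mono)
    fix p assume "p \<in> {1..N} \<times> ?S"
    obtain j s where p: "p = (j, s)" by (cases p)
    have "(cmod (daN N u (j # s)))\<^sup>2 \<le> (cmod (u s))\<^sup>2 / real N"
      using Np by (auto simp: daN_cons norm_mult norm_divide power_divide)
    thus "(case p of (j, s) \<Rightarrow> (cmod (daN N u (j # s)))\<^sup>2) \<le> (case p of (j, s) \<Rightarrow> (cmod (u s))\<^sup>2 / real N)"
      by (simp add: p)
  qed
  also have "\<dots> = (\<Sum>s\<in>?S. (cmod (u s))\<^sup>2)"
    using Np by (simp add: sum.cartesian_product[symmetric] sum_divide_distrib[symmetric])
  finally have "(\<Sum>t\<in>?T. (cmod (daN N u t))\<^sup>2) \<le> (\<Sum>s\<in>?S. (cmod (u s))\<^sup>2)" .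
  hence "L2_set (\<lambda>t. cmod (daN N u t)) ?T \<le> L2_set (\<lambda>t. cmod (u t)) ?S"
    unfolding L2_set_def by simp
  thus ?thesis using dnorm_L2[OF finT sub] dnorm_L2[OF finS, of u] by simp
qed

lemma dastarN_eq: "dastarN N u s = of_real (1 / sqrt (real N)) * (\<Sum>i\<in>{1..N}. if inI (i # s) then u (i # s) else 0)"
  unfolding dastarN_def dastar_i_def by simp

lemma dastarN_fsupp:
  assumes "fsupp u" shows "fsupp (dastarN N u)"
proof -
  have "{t. dastarN N u t \<noteq> 0} \<subseteq> tl ` {t. u t \<noteq> 0}"
  proof
    fix s assume "s \<in> {t. dastarN N u t \<noteq> 0}"
    hence "(\<Sum>i\<in>{1..N}. if inI (i # s) then u (i # s) else 0) \<noteq> 0" unfolding dastarN_eq by auto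
    then obtain i where "(if inI (i # s) then u (i # s) else 0) \<noteq> 0"
      using sum.not_neutral_contains_not_neutral by blast
    hence "u (i # s) \<noteq> 0" by (auto split: if_splits)
    thus "s \<in> tl ` {t. u t \<noteq> 0}" by (intro image_eqI[of _ _ "i # s"]) auto
  qed
  moreover have "finite (tl ` {t. u t \<noteq> 0})"
    using assms unfolding fsupp_def by auto
  ultimately show ?thesis unfolding fsupp_def by (rule finite_subset)
qed

lemma dastarN_norm:
  assumes "fsupp u" "1 \<le> N"
  shows "dnorm (dastarN N u) \<le> dnorm u"
proof -
  let ?S = "{t. u t \<noteq> 0}"
  let ?T = "tl ` ?S"
  let ?U = "(\<lambda>(i, s). i # s) ` ({1..N} \<times> ?T)"
  have finS: "finite ?S" using assms(1) unfolding fsupp_def .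
  have finT: "finite ?T" using finS by auto
  have finU: "finite ?U" using finT by auto
  have sub: "dastarN N u s \<noteq> 0 \<Longrightarrow> s \<in> ?T" for s
  proof -
    assume "dastarN N u s \<noteq> 0"
    hence "(\<Sum>i\<in>{1..N}. if inI (i # s) then u (i # s) else 0) \<noteq> 0" unfolding dastarN_eq by auto
    then obtain i where "(if inI (i # s) then u (i # s) else 0) \<noteq> 0"
      using sum.not_neutral_contains_not_neutral by blast
    hence "u (i # s) \<noteq> 0" by (auto split: if_splits)
    thus "s \<in> ?T" by (intro image_eqI[of _ _ "i # s"]) auto
  qed
  have inj: "inj_on (\<lambda>(i, s). i # s) ({1..N} \<times> ?T)" by (auto simp: inj_on_def)
  have Np: "real N > 0" using assms(2) by simp
  have pt: "(cmod (dastarN N u s))\<^sup>2 \<le> (\<Sum>i\<in>{1..N}. (cmod (u (i # s)))\<^sup>2)" for s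
  proof -
    let ?w = "\<lambda>i. if inI (i # s) then u (i # s) else 0"
    have "cmod (dastarN N u s) = (1 / sqrt (real N)) * cmod (\<Sum>i\<in>{1..N}. ?w i)"
      unfolding dastarN_eq by (simp add: norm_mult norm_divide)
    also have "\<dots> \<le> (1 / sqrt (real N)) * (\<Sum>i\<in>{1..N}. cmod (u (i # s)))"
      by (intro mult_left_mono order.trans[OF norm_sum] sum_mono) auto
    finally have "(cmod (dastarN N u s))\<^sup>2 \<le> ((1 / sqrt (real N)) * (\<Sum>i\<in>{1..N}. cmod (u (i # s))))\<^sup>2"
      by (intro power_mono) auto
    also have "\<dots> = (\<Sum>i\<in>{1..N}. cmod (u (i # s)))\<^sup>2 / real N"
      using Np by (simp add: power_mult_distrib power_divide)
    also have "\<dots> \<le> (\<Sum>i\<in>{1..N}. (cmod (u (i # s)))\<^sup>2) * card {1..N} / real N"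
      using Np by (intro divide_right_mono sum_squared_le_sum_of_squares) auto
    also have "\<dots> = (\<Sum>i\<in>{1..N}. (cmod (u (i # s)))\<^sup>2)" using Np by simp
    finally show ?thesis .
  qed
  have "(\<Sum>s\<in>?T. (cmod (dastarN N u s))\<^sup>2) \<le> (\<Sum>s\<in>?T. \<Sum>i\<in>{1..N}. (cmod (u (i # s)))\<^sup>2)"
    by (rule sum_mono) (rule pt)
  also have "\<dots> = (\<Sum>(i, s)\<in>{1..N} \<times> ?T. (cmod (u (i # s)))\<^sup>2)"
    by (subst sum.swap) (simp add: sum.cartesian_product)
  also have "\<dots> = (\<Sum>t\<in>?U. (cmod (u t))\<^sup>2)"
    by (subst sum.reindex[OF inj]) (simp add: case_prod_beta)
  also have "\<dots> \<le> (\<Sum>t\<in>?U \<union> ?S. (cmod (u t))\<^sup>2)"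
    by (rule sum_mono2) (use finU finS in simp_all)
  also have "\<dots> = (\<Sum>t\<in>?S. (cmod (u t))\<^sup>2)"
  proof (rule sum.mono_neutral_right)
    show "finite (?U \<union> ?S)" using finU finS by simp
    show "?S \<subseteq> ?U \<union> ?S" by blast
    show "\<forall>t\<in>?U \<union> ?S - ?S. (cmod (u t))\<^sup>2 = 0" by simp
  qed
  finally have "L2_set (\<lambda>t. cmod (dastarN N u t)) ?T \<le> L2_set (\<lambda>t. cmod (u t)) ?S"
    unfolding L2_set_def by simp
  thus ?thesis using dnorm_L2[OF finT sub] dnorm_L2[OF finS, of u] by simp
qed

datatype tr = Lf | Nd tr tr

fun sz :: "tr \<Rightarrow> nat" where
  "sz Lf = 0"
| "sz (Nd a b) = sz a + sz b + 1"

fun prt :: "tr \<Rightarrow> nat set set" where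
  "prt Lf = {}"
| "prt (Nd a b) = {{1, 2 * sz a+2}} \<union> (\<lambda>B. (\<lambda>x. x + 1) ` B) ` prt a \<union> (\<lambda>B. (\<lambda>x. x + (2 * sz a+2)) ` B) ` prt b"

fun opr :: "('v \<Rightarrow> 'v) \<Rightarrow> ('v \<Rightarrow> 'v) \<Rightarrow> tr \<Rightarrow> ('v \<Rightarrow> 'v)" where
  "opr ann cre Lf = id"
| "opr ann cre (Nd a b) = cre \<circ> opr ann cre a \<circ> ann \<circ> opr ann cre b"

lemma gen_op_tree: "gen_op ann cre n \<pi> A \<Longrightarrow> \<exists>t. n = sz t \<and> \<pi> = prt t \<and> A = opr ann cre t"
proof (induction rule: gen_op.induct)
  case gen_op_empty
  show ?case by (rule exI[of _ Lf]) simp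
next
  case (gen_op_step m \<pi>1 A1 k \<pi>2 A2)
  then obtain t1 t2 where "m = sz t1 \<and> \<pi>1 = prt t1 \<and> A1 = opr ann cre t1"
    "k = sz t2 \<and> \<pi>2 = prt t2 \<and> A2 = opr ann cre t2" by blast
  thus ?case by (intro exI[of _ "Nd t1 t2"]) auto
qed

lemma img_shift: "(\<lambda>x::nat. x + c) ` {a..b} = {a+c..b+c}"
proof
  show "{a+c..b+c} \<subseteq> (\<lambda>x::nat. x + c) ` {a..b}"
    by (auto intro!: image_eqI[where x="x - c" for x])
qed auto

lemma part_union: "\<Union>(prt t) = {1..2 * sz t}"
proof (induction t)
  case Lf
  then show ?case by simp
next
  case (Nd a b)
  have A: "(\<Union>B\<in>prt a. (\<lambda>x. x + 1) ` B) = (\<lambda>x. x + 1) ` {1..2 * sz a}"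
    by (simp add: Nd.IH(1) flip: image_UN)
  have B: "(\<Union>B\<in>prt b. (\<lambda>x. x + (2 * sz a+2)) ` B) = (\<lambda>x. x + (2 * sz a+2)) ` {1..2 * sz b}"
    by (simp add: Nd.IH(2) flip: image_UN)
  have A': "(\<lambda>x. x + 1) ` {1..2 * sz a} = {2..2 * sz a + 1}"
    unfolding img_shift by simp
  have B': "(\<lambda>x. x + (2 * sz a+2)) ` {1..2 * sz b} = {2 * sz a + 3..2 * sz a + 2 + 2 * sz b}"
    unfolding img_shift by simp
  show ?case unfolding prt.simps Union_Un_distrib A B A' B' by auto
qed

lemma part_card: "B \<in> prt t \<Longrightarrow> card B = 2"
proof (induction t arbitrary: B)
  case Lf
  then show ?case by simp
next
  case (Nd a b)
  from Nd.prems show ?case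
    by (auto simp: card_image inj_on_def Nd.IH)
qed

lemma inj_img: "inj f \<Longrightarrow> inj (\<lambda>B. f ` B)"
  by (rule injI) (simp add: inj_image_eq_iff)

lemma part_inj: "prt t = prt t' \<Longrightarrow> t = t'"
proof (induction t arbitrary: t')
  case Lf
  then show ?case by (cases t') auto
next
  case (Nd a b)
  then obtain a' b' where t': "t' = Nd a' b'" by (cases t') auto
  let ?P = "prt (Nd a b)"
  have sub: "\<forall>B\<in>prt c. B \<subseteq> {1..2 * sz c}" for c using part_union[of c] by auto
  have ne: "\<forall>B\<in>prt c. B \<noteq> {}" for c using part_card[of _ c] by fastforce
  have one: "{B\<in>prt (Nd c d). 1 \<in> B} = {{1, 2 * sz c+2}}" for c d
  proof -
    have "1 \<notin> B" if "B \<in> (\<lambda>B. (\<lambda>x. x + 1) ` B) ` prt c" for B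
      using that sub[of c] by fastforce
    moreover have "1 \<notin> B" if "B \<in> (\<lambda>B. (\<lambda>x. x + (2 * sz c+2)) ` B) ` prt d" for B
      using that sub[of d] by fastforce
    ultimately show ?thesis by auto
  qed
  have e: "{B\<in>prt (Nd a b). 1 \<in> B} = {B\<in>prt (Nd a' b'). 1 \<in> B}" using Nd.prems t' by (simp only:)
  have "{{1, 2 * sz a+2}} = {{1, 2 * sz a'+2}}" using e by (simp only: one)
  hence sza: "sz a = sz a'" by (auto simp: doubleton_eq_iff)
  have lowpart: "{B\<in>prt (Nd c d). B \<subseteq> {2..2 * sz c+1}} = (\<lambda>B. (\<lambda>x. x + 1) ` B) ` prt c" for c d
  proof -
    have "\<not> B \<subseteq> {2..2 * sz c+1}" if "B \<in> (\<lambda>B. (\<lambda>x. x + (2 * sz c+2)) ` B) ` prt d" for B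
      using that sub[of d] ne[of d] by fastforce
    moreover have "B \<subseteq> {2..2 * sz c+1}" if B_in: "B \<in> (\<lambda>B. (\<lambda>x. x + 1) ` B) ` prt c" for B
    proof -
      obtain B' where "B' \<in> prt c" "B = (\<lambda>x. x + 1) ` B'" using B_in by blast
      thus ?thesis using sub[of c] by force
    qed
    moreover have "\<not> {1, 2 * sz c+2} \<subseteq> {2..2 * sz c+1}" by simp
    ultimately show ?thesis unfolding prt.simps by blast
  qed
  have highpart: "{B\<in>prt (Nd c d). B \<subseteq> {2 * sz c+3..}} = (\<lambda>B. (\<lambda>x. x + (2 * sz c+2)) ` B) ` prt d" for c d
  proof -
    have "\<not> B \<subseteq> {2 * sz c+3..}" if "B \<in> (\<lambda>B. (\<lambda>x. x + 1) ` B) ` prt c" for B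
      using that sub[of c] ne[of c] by fastforce
    moreover have "B \<subseteq> {2 * sz c+3..}" if "B \<in> (\<lambda>B. (\<lambda>x. x + (2 * sz c+2)) ` B) ` prt d" for B
      using that sub[of d] by fastforce
    moreover have "\<not> {1, 2 * sz c+2} \<subseteq> {2 * sz c+3..}" by simp
    ultimately show ?thesis unfolding prt.simps by blast
  qed
  have "(\<lambda>B. (\<lambda>x. x + 1) ` B) ` prt a = (\<lambda>B. (\<lambda>x. x + 1) ` B) ` prt a'"
  proof -
    have "(\<lambda>B. (\<lambda>x. x + 1) ` B) ` prt a = {B\<in>prt (Nd a b). B \<subseteq> {2..2 * sz a+1}}" by (rule lowpart[symmetric])
    also have "\<dots> = {B\<in>prt (Nd a' b'). B \<subseteq> {2..2 * sz a'+1}}"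
      using Nd.prems t' sza by (simp only:)
    also have "\<dots> = (\<lambda>B. (\<lambda>x. x + 1) ` B) ` prt a'" by (rule lowpart)
    finally show ?thesis .
  qed
  hence pa: "prt a = prt a'"
    by (simp add: inj_image_eq_iff inj_img inj_def)
  have "(\<lambda>B. (\<lambda>x. x + (2 * sz a+2)) ` B) ` prt b = (\<lambda>B. (\<lambda>x. x + (2 * sz a+2)) ` B) ` prt b'"
  proof -
    have "(\<lambda>B. (\<lambda>x. x + (2 * sz a+2)) ` B) ` prt b = {B\<in>prt (Nd a b). B \<subseteq> {2 * sz a+3..}}" by (rule highpart[symmetric])
    also have "\<dots> = {B\<in>prt (Nd a' b'). B \<subseteq> {2 * sz a'+3..}}"
      using Nd.prems t' sza by (simp only:)
    also have "\<dots> = (\<lambda>B. (\<lambda>x. x + (2 * sz a'+2)) ` B) ` prt b'" by (rule highpart)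
    finally show ?thesis using sza by simp
  qed
  hence pb: "prt b = prt b'"
    by (simp add: inj_image_eq_iff inj_img inj_def)
  show ?case using Nd.IH pa pb t' by simp
qed

lemma word_op_tree: "word_op ann cre (prt t) = opr ann cre t"
  unfolding word_op_def
proof (rule the_equality)
  show "\<exists>n. gen_op ann cre n (prt t) (opr ann cre t)"
  proof (induction t)
    case Lf
    have "gen_op ann cre 0 {} id" by (rule gen_op_empty)
    then show ?case by (metis opr.simps(1) prt.simps(1))
  next
    case (Nd a b)
    have "gen_op ann cre (sz a) (prt a) (opr ann cre a)" "gen_op ann cre (sz b) (prt b) (opr ann cre b)"
      using Nd.IH gen_op_tree part_inj by metis+
    then have "gen_op ann cre (sz a + sz b + 1) (prt (Nd a b)) (opr ann cre (Nd a b))"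
      unfolding prt.simps opr.simps by (rule gen_op_step)
    thus ?case by blast
  qed
next
  fix A assume "\<exists>n. gen_op ann cre n (prt t) A"
  then obtain t' where "prt t = prt t'" "A = opr ann cre t'" using gen_op_tree by metis
  thus "A = opr ann cre t" using part_inj by metis
qed

definition ncr :: "nat set set \<Rightarrow> bool" where
  "ncr \<pi> \<longleftrightarrow> (\<forall>B1\<in>\<pi>. \<forall>B2\<in>\<pi>. \<forall>a b c d. a < b \<and> b < c \<and> c < d \<and> B1 = {a, c} \<and> B2 = {b, d} \<longrightarrow> False)"

lemma ncpp_iff: "ncpp k \<pi> \<longleftrightarrow> (\<forall>B\<in>\<pi>. card B = 2) \<and> (\<forall>B1\<in>\<pi>. \<forall>B2\<in>\<pi>. B1 \<noteq> B2 \<longrightarrow> B1 \<inter> B2 = {}) \<and> \<Union>\<pi> = {1..2*k} \<and> ncr \<pi>"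
  unfolding ncpp_def ncr_def by blast

lemma shift_down:
  fixes c m :: nat
  assumes cards: "\<forall>B\<in>\<pi>. card B = 2"
    and disj: "\<forall>B1\<in>\<pi>. \<forall>B2\<in>\<pi>. B1 \<noteq> B2 \<longrightarrow> B1 \<inter> B2 = {}"
    and un: "\<Union>\<pi> = {c+1..c+2*m}" and nc: "ncr \<pi>"
  shows "ncpp m ((\<lambda>B. (\<lambda>x. x - c) ` B) ` \<pi>)"
    and "(\<lambda>B. (\<lambda>x. x + c) ` B) ` ((\<lambda>B. (\<lambda>x. x - c) ` B) ` \<pi>) = \<pi>"
proof -
  let ?f = "\<lambda>x::nat. x - c"
  have sub: "B \<subseteq> {c+1..c+2*m}" if "B \<in> \<pi>" for B using un that by auto
  have inj: "inj_on ?f {c+1..}" by (auto simp: inj_on_def)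
  have hback: "(\<lambda>x. x + c) ` (?f ` B) = B" if "B \<in> \<pi>" for B
  proof -
    have "(\<lambda>x. x + c) ` (?f ` B) = (\<lambda>x. x - c + c) ` B" by (simp add: image_image)
    also have "\<dots> = B"
    proof -
      have h: "\<forall>x\<in>B. x - c + c = x" using sub[OF that] by auto
      have "(\<lambda>x. x - c + c) ` B = id ` B" by (rule image_cong) (use h in auto)
      thus ?thesis by simp
    qed
    finally show ?thesis .
  qed
  show "(\<lambda>B. (\<lambda>x. x + c) ` B) ` ((\<lambda>B. (\<lambda>x. x - c) ` B) ` \<pi>) = \<pi>"
    using hback by (simp add: image_image)
  show "ncpp m ((\<lambda>B. (\<lambda>x. x - c) ` B) ` \<pi>)"
    unfolding ncpp_iff
  proof (intro conjI ballI impI)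
    fix B' assume "B' \<in> (\<lambda>B. ?f ` B) ` \<pi>"
    then obtain B where B: "B \<in> \<pi>" "B' = ?f ` B" by blast
    have "inj_on ?f B" by (rule inj_on_subset[OF inj]) (use sub[OF B(1)] in auto)
    thus "card B' = 2" using B cards by (simp add: card_image)
  next
    fix B1' B2' assume a: "B1' \<in> (\<lambda>B. ?f ` B) ` \<pi>" "B2' \<in> (\<lambda>B. ?f ` B) ` \<pi>" "B1' \<noteq> B2'"
    then obtain B1 B2 where B: "B1 \<in> \<pi>" "B1' = ?f ` B1" "B2 \<in> \<pi>" "B2' = ?f ` B2" by blast
    hence "B1 \<noteq> B2" using a(3) by auto
    hence "B1 \<inter> B2 = {}" using disj B by auto
    moreover have "inj_on ?f (B1 \<union> B2)" by (rule inj_on_subset[OF inj]) (use sub[OF B(1)] sub[OF B(3)] in auto)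
    ultimately show "B1' \<inter> B2' = {}" using B inj_on_image_Int[of ?f "B1 \<union> B2" B1 B2] by simp
  next
    have "\<Union>((\<lambda>B. ?f ` B) ` \<pi>) = ?f ` \<Union>\<pi>" by (simp add: image_Union)
    also have "\<dots> = {1..2*m}" unfolding un
    proof
      show "{1..2 * m} \<subseteq> ?f ` {c + 1..c + 2 * m}"
        by (auto intro!: image_eqI[where x="x + c" for x])
    qed auto
    finally show "\<Union>((\<lambda>B. ?f ` B) ` \<pi>) = {1..2*m}" .
  next
    show "ncr ((\<lambda>B. ?f ` B) ` \<pi>)" unfolding ncr_def
    proof (intro ballI allI impI)
      fix B1' B2' a b d e
      assume a: "B1' \<in> (\<lambda>B. ?f ` B) ` \<pi>" "B2' \<in> (\<lambda>B. ?f ` B) ` \<pi>"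
        and h: "a < b \<and> b < d \<and> d < e \<and> B1' = {a, d} \<and> B2' = {b, e}"
      then obtain B1 B2 where B: "B1 \<in> \<pi>" "B1' = ?f ` B1" "B2 \<in> \<pi>" "B2' = ?f ` B2" by blast
      have "B1 = (\<lambda>x. x + c) ` B1'" using hback[OF B(1)] B(2) by simp
      hence B1: "B1 = {a + c, d + c}" using h by simp
      have "B2 = (\<lambda>x. x + c) ` B2'" using hback[OF B(3)] B(4) by simp
      hence B2: "B2 = {b + c, e + c}" using h by simp
      show False using nc B(1) B(3) B1 B2 h unfolding ncr_def
        by (metis add_less_cancel_right)
    qed
  qed
qed

lemma card_union_pairs:
  assumes "finite F" "\<forall>B\<in>F. card B = 2" "\<forall>B1\<in>F. \<forall>B2\<in>F. B1 \<noteq> B2 \<longrightarrow> B1 \<inter> B2 = {}"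
  shows "card (\<Union>F) = 2 * card F"
proof -
  have fin: "\<And>B. B \<in> F \<Longrightarrow> finite B" using assms(2) by (metis card_eq_0_iff zero_neq_numeral)
  have "card (\<Union>F) = sum card F"
    by (rule card_Union_disjoint) (use assms(3) fin in \<open>auto simp: pairwise_def disjnt_def\<close>)
  also have "\<dots> = sum (\<lambda>_. 2) F" using assms(2) by (intro sum.cong) auto
  finally show ?thesis by simp
qed

lemma ncrD: "ncr \<pi> \<Longrightarrow> B1 \<in> \<pi> \<Longrightarrow> B2 \<in> \<pi> \<Longrightarrow> a < b \<Longrightarrow> b < c \<Longrightarrow> c < d \<Longrightarrow> B1 = {a, c} \<Longrightarrow> B2 = {b, d} \<Longrightarrow> False"
  unfolding ncr_def by blast

lemma ncr_mono: "ncr \<pi> \<Longrightarrow> P \<subseteq> \<pi> \<Longrightarrow> ncr P"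
  unfolding ncr_def by (meson subsetD)

lemma ncpp_tree: "ncpp k \<pi> \<Longrightarrow> \<exists>t. prt t = \<pi> \<and> sz t = k"
proof (induction k arbitrary: \<pi> rule: less_induct)
  case (less k)
  from less.prems have cards: "\<forall>B\<in>\<pi>. card B = 2"
    and disj: "\<forall>B1\<in>\<pi>. \<forall>B2\<in>\<pi>. B1 \<noteq> B2 \<longrightarrow> B1 \<inter> B2 = {}"
    and un: "\<Union>\<pi> = {1..2*k}" and nc: "ncr \<pi>" unfolding ncpp_iff by auto
  have finpi: "finite \<pi>"
    by (rule finite_subset[of _ "Pow {1..2*k}"]) (use un in auto)
  show ?case
  proof (cases "k = 0")
    case True
    have "\<pi> = {}"
    proof (rule ccontr)
      assume "\<pi> \<noteq> {}"
      then obtain B where "B \<in> \<pi>" by auto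
      hence "card B = 2" "B \<subseteq> {}" using cards un True by auto
      thus False by simp
    qed
    thus ?thesis using True by (intro exI[of _ Lf]) simp
  next
    case False
    have "1 \<in> \<Union>\<pi>" using un False by simp
    then obtain B0 where B0: "B0 \<in> \<pi>" "1 \<in> B0" by auto
    obtain j where j: "B0 = {1, j}" "j \<noteq> 1"
    proof -
      obtain x y where "B0 = {x, y}" "x \<noteq> y" using cards B0(1) card_2_iff by metis
      thus thesis using that B0(2) by (metis doubleton_eq_iff insert_iff singletonD)
    qed
    have "j \<in> \<Union>\<pi>" using B0(1) j by auto
    hence "j \<in> {1..2*k}" using un by simp
    hence jr: "2 \<le> j" "j \<le> 2*k" using j(2) by auto
    define P1 where "P1 = {B\<in>\<pi>. B \<subseteq> {2..j-1}}"
    define P2 where "P2 = {B\<in>\<pi>. B \<subseteq> {j+1..2*k}}"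
    have split: "B = B0 \<or> B \<in> P1 \<or> B \<in> P2" if Bin: "B \<in> \<pi>" for B
    proof (cases "B = B0")
      case False
      hence dj: "B \<inter> B0 = {}" using disj Bin B0(1) by auto
      obtain b d where bd: "B = {b, d}" "b < d"
      proof -
        obtain x y where "B = {x, y}" "x \<noteq> y" using cards Bin card_2_iff by metis
        thus thesis using that by (metis insert_commute linorder_neq_iff)
      qed
      have r: "1 \<le> b" "d \<le> 2*k" "b \<noteq> 1" "b \<noteq> j" "d \<noteq> 1" "d \<noteq> j" using un Bin bd dj j by auto
      have "\<not> (b < j \<and> j < d)"
      proof
        assume "b < j \<and> j < d"
        moreover have "1 < b" using r by simp
        ultimately show False using ncrD[OF nc B0(1) Bin, of 1 b j d] bd j by simp
      qed
      hence "d < j \<or> j < b" using r bd by linarith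
      thus ?thesis
      proof
        assume "d < j" hence "B \<subseteq> {2..j-1}" using bd r by auto
        thus ?thesis using Bin unfolding P1_def by simp
      next
        assume "j < b" hence "B \<subseteq> {j+1..2*k}" using bd r by auto
        thus ?thesis using Bin unfolding P2_def by simp
      qed
    qed simp
    have un1: "\<Union>P1 = {2..j-1}"
    proof
      show "\<Union>P1 \<subseteq> {2..j-1}" unfolding P1_def by auto
      show "{2..j-1} \<subseteq> \<Union>P1"
      proof
        fix x assume x: "x \<in> {2..j-1}"
        hence "x \<in> \<Union>\<pi>" using un jr by auto
        then obtain B where B: "B \<in> \<pi>" "x \<in> B" by auto
        have "B \<noteq> B0" using x B j jr by auto
        moreover have "B \<notin> P2"
        proof
          assume "B \<in> P2" hence "x \<in> {j+1..2*k}" using B unfolding P2_def by auto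
          thus False using x jr by auto
        qed
        ultimately have "B \<in> P1" using split[OF B(1)] by auto
        thus "x \<in> \<Union>P1" using B by auto
      qed
    qed
    have un2: "\<Union>P2 = {j+1..2*k}"
    proof
      show "\<Union>P2 \<subseteq> {j+1..2*k}" unfolding P2_def by auto
      show "{j+1..2*k} \<subseteq> \<Union>P2"
      proof
        fix x assume x: "x \<in> {j+1..2*k}"
        hence "x \<in> \<Union>\<pi>" using un jr by auto
        then obtain B where B: "B \<in> \<pi>" "x \<in> B" by auto
        have "B \<noteq> B0" using x B j jr by auto
        moreover have "B \<notin> P1"
        proof
          assume "B \<in> P1" hence "x \<in> {2..j-1}" using B unfolding P1_def by auto
          thus False using x jr by auto
        qed
        ultimately have "B \<in> P2" using split[OF B(1)] by auto
        thus "x \<in> \<Union>P2" using B by auto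
      qed
    qed
    have P1s: "P1 \<subseteq> \<pi>" and P2s: "P2 \<subseteq> \<pi>" unfolding P1_def P2_def by auto
    have fin1: "finite P1" using finite_subset[OF P1s finpi] .
    have fin2: "finite P2" using finite_subset[OF P2s finpi] .
    define m1 where "m1 = card P1"
    define m2 where "m2 = card P2"
    have cards1: "\<forall>B\<in>P1. card B = 2" using cards P1s by blast
    have cards2: "\<forall>B\<in>P2. card B = 2" using cards P2s by blast
    have disj1: "\<forall>B1\<in>P1. \<forall>B2\<in>P1. B1 \<noteq> B2 \<longrightarrow> B1 \<inter> B2 = {}" using disj P1s by blast
    have disj2: "\<forall>B1\<in>P2. \<forall>B2\<in>P2. B1 \<noteq> B2 \<longrightarrow> B1 \<inter> B2 = {}" using disj P2s by blast
    have c1: "j - 2 = 2 * m1"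
      using card_union_pairs[OF fin1 cards1 disj1] un1 unfolding m1_def by simp
    have c2: "2 * k - j = 2 * m2"
      using card_union_pairs[OF fin2 cards2 disj2] un2 unfolding m2_def by simp
    have jeq: "j = 2 * m1 + 2" using c1 jr by linarith
    have keq: "k = m1 + m2 + 1" using c2 jeq jr by linarith
    have nc1: "ncr P1" using ncr_mono[OF nc P1s] .
    have nc2: "ncr P2" using ncr_mono[OF nc P2s] .
    have u1: "\<Union>P1 = {1+1..1+2*m1}" using un1 jeq by simp
    have u2: "\<Union>P2 = {j+1..j+2*m2}" using un2 c2 jr by (metis le_add_diff_inverse)
    have sd1: "ncpp m1 ((\<lambda>B. (\<lambda>x. x - 1) ` B) ` P1)"
      "(\<lambda>B. (\<lambda>x. x + 1) ` B) ` ((\<lambda>B. (\<lambda>x. x - 1) ` B) ` P1) = P1"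
      using shift_down[OF cards1 disj1 u1 nc1] by auto
    have sd2: "ncpp m2 ((\<lambda>B. (\<lambda>x. x - j) ` B) ` P2)"
      "(\<lambda>B. (\<lambda>x. x + j) ` B) ` ((\<lambda>B. (\<lambda>x. x - j) ` B) ` P2) = P2"
      using shift_down[OF cards2 disj2 u2 nc2] by auto
    obtain t1 where t1: "prt t1 = (\<lambda>B. (\<lambda>x. x - 1) ` B) ` P1" "sz t1 = m1"
      using less.IH[OF _ sd1(1)] keq by auto
    obtain t2 where t2: "prt t2 = (\<lambda>B. (\<lambda>x. x - j) ` B) ` P2" "sz t2 = m2"
      using less.IH[OF _ sd2(1)] keq by auto
    have "prt (Nd t1 t2) = {B0} \<union> P1 \<union> P2"
      using sd1(2) sd2(2) t1 t2 j jeq by simp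
    also have "\<dots> = \<pi>" using split B0(1) P1s P2s by blast
    finally show ?thesis using t1 t2 keq by (intro exI[of _ "Nd t1 t2"]) simp
  qed
qed

definition Dp :: "nat \<Rightarrow> cvec \<Rightarrow> bool" where
  "Dp n g \<longleftrightarrow> (\<forall>xs. g xs \<noteq> 0 \<longrightarrow> length xs = n \<and> (n = 0 \<or> inX xs) \<and> (\<forall>x\<in>set xs. 0 \<le> x \<and> x \<le> 1)) \<and>
     (\<forall>m\<in>{1..n}. \<exists>p. is_poly_fun n p \<and>
        (\<forall>xs. length xs = n \<and> dec_inc_at m xs \<and> (\<forall>x\<in>set xs. 0 \<le> x \<and> x \<le> 1) \<longrightarrow> g xs = p xs))"

definition V :: "nat \<Rightarrow> nat \<Rightarrow> cvec \<Rightarrow> dvec" where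
  "V N n g t = (if length t = n \<and> (n = 0 \<or> inI t) \<and> (\<forall>i\<in>set t. i \<le> N)
       then of_real (1 / sqrt (real N) ^ n) * g (map (\<lambda>i. real i / real N) t) else 0)"

lemma inD_Dp: "1 \<le> n \<Longrightarrow> inD n g \<Longrightarrow> Dp n g"
  unfolding inD_def Dp_def by auto

lemma V_vN: "1 \<le> n \<Longrightarrow> V N n g = vN N n g"
  unfolding V_def vN_def by (intro ext) auto

lemma V_fsupp: "fsupp (V N n g)"
proof -
  have "{t. V N n g t \<noteq> 0} \<subseteq> {t. set t \<subseteq> {0..N} \<and> length t = n}"
    unfolding V_def by (auto split: if_splits)
  moreover have "finite {t. set t \<subseteq> {0..N} \<and> length t = n}"
    by (rule finite_lists_length_eq) simp
  ultimately show ?thesis unfolding fsupp_def by (rule finite_subset)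
qed

lemma V0: "V N 0 g t = (if t = [] then g [] else 0)"
  unfolding V_def by auto

lemma inI_ge1: "inI t \<Longrightarrow> i \<in> set t \<Longrightarrow> 1 \<le> i"
  unfolding inI_def by auto

lemma inI_cons: "inI (i # s) \<Longrightarrow> s \<noteq> [] \<Longrightarrow> inI s"
  unfolding inI_def using dia_cons_D by (metis list.set_intros(2))

lemma smono_div: "1 \<le> N \<Longrightarrow> strict_mono (\<lambda>i::nat. real i / real N)"
  by (rule strict_monoI) (simp add: divide_strict_right_mono)

lemma dia_map_div: "1 \<le> N \<Longrightarrow> dec_inc_at m (map (\<lambda>i. real i / real N) t) \<longleftrightarrow> dec_inc_at m t"
  by (rule dia_map[OF smono_div])

lemma inI_inX: "1 \<le> N \<Longrightarrow> inI t \<Longrightarrow> inX (map (\<lambda>i. real i / real N) t)"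
  unfolding inI_def inX_def using dia_map_div by blast

lemma map_div_unit: "1 \<le> N \<Longrightarrow> (\<forall>i\<in>set t. 1 \<le> i \<and> i \<le> N) \<Longrightarrow> \<forall>x\<in>set (map (\<lambda>i. real i / real N) t). 0 \<le> x \<and> x \<le> 1"
  by auto

lemma ca_Dp:
  assumes "Dp n g"
  shows "Dp (Suc n) (ca g)"
proof -
  from assms have sup: "\<And>xs. g xs \<noteq> 0 \<Longrightarrow> length xs = n \<and> (n = 0 \<or> inX xs) \<and> (\<forall>x\<in>set xs. 0 \<le> x \<and> x \<le> 1)"
    and pc: "\<And>m. m \<in> {1..n} \<Longrightarrow> \<exists>p. is_poly_fun n p \<and>
        (\<forall>xs. length xs = n \<and> dec_inc_at m xs \<and> (\<forall>x\<in>set xs. 0 \<le> x \<and> x \<le> 1) \<longrightarrow> g xs = p xs)"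
    unfolding Dp_def by auto
  have ca_cons: "ca g (x # ys) = of_real (indicator {0..1} x * indicator {zs. inX zs} (x # ys)) * g ys" for x ys
    unfolding ca_def by simp
  show ?thesis unfolding Dp_def
  proof (intro conjI)
    show "\<forall>xs. ca g xs \<noteq> 0 \<longrightarrow> length xs = Suc n \<and> (Suc n = 0 \<or> inX xs) \<and> (\<forall>x\<in>set xs. 0 \<le> x \<and> x \<le> 1)"
    proof (intro allI impI)
    fix xs assume nz: "ca g xs \<noteq> 0"
    then obtain x ys where xs: "xs = x # ys" unfolding ca_def by (cases xs) auto
    from nz have "x \<in> {0..1}" "inX (x # ys)" "g ys \<noteq> 0"
      unfolding xs ca_cons by (auto split: split_indicator_asm)
    thus "length xs = Suc n \<and> (Suc n = 0 \<or> inX xs) \<and> (\<forall>x\<in>set xs. 0 \<le> x \<and> x \<le> 1)"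
      using sup[of ys] xs by auto
    qed
  next
    show "\<forall>m\<in>{1..Suc n}. \<exists>p. is_poly_fun (Suc n) p \<and>
        (\<forall>xs. length xs = Suc n \<and> dec_inc_at m xs \<and> (\<forall>x\<in>set xs. 0 \<le> x \<and> x \<le> 1) \<longrightarrow> ca g xs = p xs)"
    proof
    fix m assume m: "m \<in> {1..Suc n}"
    obtain p where p: "is_poly_fun n p"
      "\<And>ys. length ys = n \<Longrightarrow> (n = 0 \<or> (if m = 1 then dec_inc_at 1 ys else dec_inc_at (m - 1) ys)) \<Longrightarrow>
              (\<forall>x\<in>set ys. 0 \<le> x \<and> x \<le> 1) \<Longrightarrow> g ys = p ys"
    proof (cases "n = 0")
      case True
      show thesis by (rule that[of "\<lambda>_. g []"]) (use True poly_const in auto)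
    next
      case False
      define m' where "m' = (if m = 1 then 1 else m - 1)"
      have "m' \<in> {1..n}" using m False unfolding m'_def by auto
      from pc[OF this] obtain p where "is_poly_fun n p"
        "\<forall>xs. length xs = n \<and> dec_inc_at m' xs \<and> (\<forall>x\<in>set xs. 0 \<le> x \<and> x \<le> 1) \<longrightarrow> g xs = p xs" by blast
      thus thesis using that[of p] False unfolding m'_def by (auto split: if_splits)
    qed
    show "\<exists>p. is_poly_fun (Suc n) p \<and>
        (\<forall>xs. length xs = Suc n \<and> dec_inc_at m xs \<and> (\<forall>x\<in>set xs. 0 \<le> x \<and> x \<le> 1) \<longrightarrow> ca g xs = p xs)"
    proof (intro exI conjI allI impI)
      show "is_poly_fun (Suc n) (\<lambda>xs. p (tl xs))" by (rule poly_tl[OF p(1)])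
      fix xs :: "real list" assume a: "length xs = Suc n \<and> dec_inc_at m xs \<and> (\<forall>x\<in>set xs. 0 \<le> x \<and> x \<le> 1)"
      then obtain x ys where xs: "xs = x # ys" by (cases xs) auto
      have ys: "length ys = n" "\<forall>x\<in>set ys. 0 \<le> x \<and> x \<le> 1" using a xs by auto
      have x01: "x \<in> {0..1}" using a xs by auto
      have inx: "inX (x # ys)" using a xs unfolding inX_def by blast
      have "n = 0 \<or> (if m = 1 then dec_inc_at 1 ys else dec_inc_at (m - 1) ys)"
      proof (cases "ys = []")
        case True thus ?thesis using ys by simp
      next
        case False
        from dia_cons_D[of m x ys] a xs False show ?thesis by auto
      qed
      hence "g ys = p ys" using p(2) ys by blast
      thus "ca g xs = p (tl xs)" using x01 inx unfolding xs ca_cons by simp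
    qed
    qed
  qed
qed

lemma ca_V:
  assumes "Dp n g" "1 \<le> N"
  shows "daN N (V N n g) = V N (Suc n) (ca g)"
proof
  fix t
  let ?f = "\<lambda>i. real i / real N"
  show "daN N (V N n g) t = V N (Suc n) (ca g) t"
  proof (cases t)
    case Nil
    then show ?thesis by (simp add: daN_nil V_def)
  next
    case (Cons j s)
    show ?thesis
    proof (cases "inI (j # s) \<and> length s = n \<and> j \<le> N \<and> (\<forall>i\<in>set s. i \<le> N)")
      case True
      hence j1: "1 \<le> j" using inI_ge1 by auto
      have sI: "n = 0 \<or> inI s" using True inI_cons by (cases s) auto
      have fj: "?f j \<in> {0..1}" using True j1 assms(2) by auto
      have inx: "inX (map ?f (j # s))" using inI_inX[OF assms(2)] True by blast
      have "daN N (V N n g) t = of_real (1 / sqrt (real N)) * (of_real (1 / sqrt (real N) ^ n) * g (map ?f s))"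
        using True j1 sI unfolding Cons daN_cons V_def by simp
      also have "\<dots> = of_real (1 / sqrt (real N) ^ Suc n) * g (map ?f s)" by simp
      also have "\<dots> = V N (Suc n) (ca g) t"
        using True fj inx unfolding Cons V_def ca_def by simp
      finally show ?thesis .
    next
      case False
      have "V N (Suc n) (ca g) t = 0" using False unfolding Cons V_def by auto
      moreover have "daN N (V N n g) t = 0" using False unfolding Cons daN_cons V_def by auto
      ultimately show ?thesis by simp
    qed
  qed
qed

lemma const_sqrt:
  assumes "1 \<le> N"
  shows "1 / sqrt (real N) * (1 / sqrt (real N) ^ Suc n) = 1 / sqrt (real N) ^ n / real N"
proof -
  have s: "sqrt (real N) * sqrt (real N) = real N" using assms by simp
  have p: "sqrt (real N) > 0" using assms by simp
  have "1 / sqrt (real N) * (1 / sqrt (real N) ^ Suc n) = 1 / ((sqrt (real N) * sqrt (real N)) * sqrt (real N) ^ n)"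
    by (simp add: mult.assoc)
  also have "\<dots> = 1 / (real N * sqrt (real N) ^ n)" by (simp only: s)
  also have "\<dots> = 1 / sqrt (real N) ^ n / real N" by (simp add: mult.commute)
  finally show ?thesis .
qed

context
  fixes g :: cvec and n :: nat and EE :: "nat \<Rightarrow> (nat \<Rightarrow> nat) set" and cc :: "nat \<Rightarrow> (nat \<Rightarrow> nat) \<Rightarrow> complex"
  assumes sup: "\<And>xs. g xs \<noteq> 0 \<Longrightarrow> length xs = Suc n \<and> inX xs \<and> (\<forall>x\<in>set xs. 0 \<le> x \<and> x \<le> 1)"
    and fE: "\<And>m. m \<in> {1..Suc n} \<Longrightarrow> finite (EE m)"
    and gP: "\<And>m xs. m \<in> {1..Suc n} \<Longrightarrow> length xs = Suc n \<Longrightarrow> dec_inc_at m xs \<Longrightarrow> (\<forall>x\<in>set xs. 0 \<le> x \<and> x \<le> 1)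
              \<Longrightarrow> g xs = Ppoly (EE m) (cc m) (Suc n) xs"
begin

lemma castar_F0:
  assumes "n = 0"
  shows "castar g [] = Iint (EE 1) (cc 1) 0 0 1 []"
proof -
  have "castar g [] = (LINT x:{0..1}|lborel. g [x])" unfolding castar_def by simp
  also have "\<dots> = Iint (EE 1) (cc 1) 0 0 1 []"
  proof (rule int_Iint)
    show "finite (EE 1)" using fE by simp
    fix x :: real assume "0 < x" "x < 1"
    thus "g [x] = Ppoly (EE 1) (cc 1) (Suc 0) [x]"
      using gP[of 1 "[x]"] assms by (simp add: dia_single)
  qed simp
  finally show ?thesis .
qed

lemma castar_F1:
  assumes n: "1 \<le> n" and y: "length y = n" "\<forall>v\<in>set y. 0 \<le> v \<and> v \<le> 1" and m: "dec_inc_at m y"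
  shows "castar g y = (if m = 1 then Iint (EE 1) (cc 1) n 0 (hd y) y else 0) + Iint (EE (Suc m)) (cc (Suc m)) n (hd y) 1 y"
proof -
  obtain y0 ys where yy: "y = y0 # ys" using y(1) n by (cases y) auto
  have mr0: "1 \<le> m \<and> m \<le> length y" using m unfolding dec_inc_at_def by (elim conjE) (intro conjI)
  have mr: "1 \<le> m" "m \<le> n" using mr0 y(1) by auto
  have inx: "inX y" using m unfolding inX_def by blast
  have y0: "0 \<le> y0" "y0 \<le> 1" using y(2) yy by auto
  have d1: "dec_inc_at 1 y \<longleftrightarrow> m = 1" using dia_unique[OF m, of 1] m by blast
  have up: "(LINT x:{y0..1}|lborel. g (x # y)) = Iint (EE (Suc m)) (cc (Suc m)) n y0 1 y"
  proof (rule int_Iint)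
    show "finite (EE (Suc m))" using fE mr by simp
    fix x :: real assume x: "y0 < x" "x < 1"
    have "dec_inc_at (Suc m) (x # y)" using dia_cons_I2[OF m] x yy by simp
    thus "g (x # y) = Ppoly (EE (Suc m)) (cc (Suc m)) (Suc n) (x # y)"
      using gP[of "Suc m" "x # y"] mr y x y0 by auto
  qed (use y0 in simp)
  have lo: "(LINT x:{0..y0}|lborel. g (x # y)) = Iint (EE 1) (cc 1) n 0 y0 y" if m1: "m = 1"
  proof (rule int_Iint)
    show "finite (EE 1)" using fE by simp
    fix x :: real assume x: "0 < x" "x < y0"
    have "dec_inc_at 1 (x # y)" using dia_cons_I1[of y x] m m1 x yy by simp
    thus "g (x # y) = Ppoly (EE 1) (cc 1) (Suc n) (x # y)"
      using gP[of 1 "x # y"] y x y0 by auto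
  qed (use y0 in simp)
  show ?thesis
    using inx d1 up lo unfolding yy castar_def by (simp add: yy)
qed

lemma castar_Dp: "Dp n (castar g)"
  unfolding Dp_def
proof (intro conjI)
  show "\<forall>xs. castar g xs \<noteq> 0 \<longrightarrow> length xs = n \<and> (n = 0 \<or> inX xs) \<and> (\<forall>x\<in>set xs. 0 \<le> x \<and> x \<le> 1)"
  proof (intro allI impI)
    fix xs :: "real list" assume nz: "castar g xs \<noteq> 0"
    have zero: "castar g xs = 0" if "\<And>x. g (x # xs) = 0"
    proof (cases xs)
      case Nil
      hence "(\<lambda>x. g [x]) = (\<lambda>x. 0)" using that by auto
      thus ?thesis unfolding castar_def Nil by simp
    next
      case (Cons x1 ys)
      have h: "g (x # x1 # ys) = 0" for x using that Cons by auto
      show ?thesis unfolding Cons castar_def by (simp add: h)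
    qed
    obtain x where gx: "g (x # xs) \<noteq> 0" using zero nz by blast
    from sup[OF gx] have l: "length xs = n" and u: "\<forall>v\<in>set xs. 0 \<le> v \<and> v \<le> 1" by auto
    have "n = 0 \<or> inX xs"
    proof (cases xs)
      case Nil thus ?thesis using l by simp
    next
      case (Cons x1 ys)
      thus ?thesis using nz unfolding castar_def by (auto split: if_splits)
    qed
    thus "length xs = n \<and> (n = 0 \<or> inX xs) \<and> (\<forall>x\<in>set xs. 0 \<le> x \<and> x \<le> 1)" using l u by simp
  qed
next
  show "\<forall>m\<in>{1..n}. \<exists>p. is_poly_fun n p \<and>
        (\<forall>xs. length xs = n \<and> dec_inc_at m xs \<and> (\<forall>x\<in>set xs. 0 \<le> x \<and> x \<le> 1) \<longrightarrow> castar g xs = p xs)"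
  proof
    fix m assume m: "m \<in> {1..n}"
    hence n1: "1 \<le> n" by simp
    let ?q = "\<lambda>y. (if m = 1 then 1 else 0) * Iint (EE 1) (cc 1) n 0 (y ! 0) y + Iint (EE (Suc m)) (cc (Suc m)) n (y ! 0) 1 y"
    show "\<exists>p. is_poly_fun n p \<and>
        (\<forall>xs. length xs = n \<and> dec_inc_at m xs \<and> (\<forall>x\<in>set xs. 0 \<le> x \<and> x \<le> 1) \<longrightarrow> castar g xs = p xs)"
    proof (intro exI conjI allI impI)
      show "is_poly_fun n ?q"
        by (intro poly_add poly_scale poly_lower poly_upper n1 fE) (use m in auto)
      fix xs :: "real list" assume a: "length xs = n \<and> dec_inc_at m xs \<and> (\<forall>x\<in>set xs. 0 \<le> x \<and> x \<le> 1)"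
      hence "xs \<noteq> []" using n1 by auto
      hence "hd xs = xs ! 0" by (simp add: hd_conv_nth)
      thus "castar g xs = ?q xs" using castar_F1[OF n1, of xs m] a by simp
    qed
  qed
qed

lemma dsum_eq:
  assumes N: "1 \<le> N" and s: "length s = n" "\<forall>i\<in>set s. 1 \<le> i \<and> i \<le> N"
  shows "dastarN N (V N (Suc n) g) s = of_real (1 / sqrt (real N) ^ n) *
     ((\<Sum>i\<in>{1..N}. if inI (i # s) then g (real i / real N # map (\<lambda>i. real i / real N) s) else 0) / of_nat N)"
proof -
  let ?c = "complex_of_real (1 / sqrt (real N) ^ Suc n)"
  have "(\<Sum>i\<in>{1..N}. if inI (i # s) then V N (Suc n) g (i # s) else 0)
      = (\<Sum>i\<in>{1..N}. ?c * (if inI (i # s) then g (real i / real N # map (\<lambda>i. real i / real N) s) else 0))"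
  proof (intro sum.cong refl)
    fix i assume i: "i \<in> {1..N}"
    show "(if inI (i # s) then V N (Suc n) g (i # s) else 0) = ?c * (if inI (i # s) then g (real i / real N # map (\<lambda>i. real i / real N) s) else 0)"
      using s i unfolding V_def by simp
  qed
  also have "\<dots> = ?c * (\<Sum>i\<in>{1..N}. if inI (i # s) then g (real i / real N # map (\<lambda>i. real i / real N) s) else 0)"
    by (simp add: sum_distrib_left)
  finally have e: "(\<Sum>i\<in>{1..N}. if inI (i # s) then V N (Suc n) g (i # s) else 0) = ?c * (\<Sum>i\<in>{1..N}. if inI (i # s) then g (real i / real N # map (\<lambda>i. real i / real N) s) else 0)" .
  have k: "complex_of_real (1 / sqrt (real N)) * ?c = of_real (1 / sqrt (real N) ^ n) / of_nat N"
  proof -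
    have "complex_of_real (1 / sqrt (real N)) * ?c = of_real (1 / sqrt (real N) * (1 / sqrt (real N) ^ Suc n))"
      by (simp only: of_real_mult)
    also have "\<dots> = of_real (1 / sqrt (real N) ^ n / real N)" by (simp only: const_sqrt[OF N])
    also have "\<dots> = of_real (1 / sqrt (real N) ^ n) / of_nat N" by simp
    finally show ?thesis .
  qed
  show ?thesis unfolding dastarN_eq e mult.assoc[symmetric] k by simp
qed


lemma inI_single: "1 \<le> i \<Longrightarrow> inI [i]"
  unfolding inI_def using dia_single by auto

lemma point_bound:
  assumes N: "1 \<le> N" and s: "length s = n" "\<forall>i\<in>set s. 1 \<le> i \<and> i \<le> N"
  shows "cmod (dastarN N (V N (Suc n) g) s - V N n (castar g) s)
     \<le> 1 / sqrt (real N) ^ n * (3 * (\<Sum>m\<in>{1..Suc n}. \<Sum>e\<in>EE m. cmod (cc m e)) / real N)"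
proof -
  define f where "f i = real i / real N" for i :: nat
  define M where "M m = (\<Sum>e\<in>EE m. cmod (cc m e))" for m :: nat
  define Ms where "Ms = (\<Sum>m\<in>{1..Suc n}. M m)"
  define c where "c = 1 / sqrt (real N) ^ n"
  have M0: "0 \<le> M m" for m unfolding M_def by (rule sum_nonneg) simp
  have Mle: "M m \<le> Ms" if "m \<in> {1..Suc n}" for m
    unfolding Ms_def by (rule member_le_sum[OF that]) (use M0 in auto)
  have Ms0: "0 \<le> Ms" unfolding Ms_def by (rule sum_nonneg) (use M0 in auto)
  have Np: "real N > 0" using N by simp
  have c0: "0 \<le> c" unfolding c_def by simp
  define y where "y = map f s"
  have yl: "length y = n" using s unfolding y_def by simp
  have yu: "\<forall>v\<in>set y. 0 \<le> v \<and> v \<le> 1" using s N unfolding y_def f_def by auto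
  have fu: "0 \<le> f i \<and> f i \<le> 1" if "i \<in> {1..N}" for i using that N unfolding f_def by auto
  define h where "h i = (if inI (i # s) then g (f i # y) else 0)" for i
  have D: "dastarN N (V N (Suc n) g) s = of_real c * ((\<Sum>i\<in>{1..N}. h i) / of_nat N)"
    unfolding h_def c_def y_def f_def by (rule dsum_eq[OF N s])
  have Rb: "(3 * Ms) / real N \<ge> 0" using Ms0 Np by simp
  have goal: "cmod ((\<Sum>i\<in>{1..N}. h i) / of_nat N - (if n = 0 \<or> inI s then castar g y else 0)) \<le> 3 * Ms / real N"
  proof (cases "n = 0")
    case True
    hence s0: "s = []" "y = []" using s yl by auto
    have hi: "h i = Ppoly (EE 1) (cc 1) (Suc 0) (f i # [])" if "i \<in> {1..N}" for i
    proof -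
      have "inI [i]" using that by (intro inI_single) auto
      moreover have "g [f i] = Ppoly (EE 1) (cc 1) (Suc 0) [f i]"
        using gP[of 1 "[f i]"] True fu[OF that] by (simp add: dia_single)
      ultimately show ?thesis unfolding h_def s0 by simp
    qed
    have "(\<Sum>i\<in>{1..N}. h i) = (\<Sum>i\<in>{0<..N}. Ppoly (EE 1) (cc 1) (Suc 0) ((real i / real N) # []))"
      using hi unfolding f_def by (simp add: atLeastSucAtMost_greaterThanAtMost[symmetric])
    moreover have "castar g y = Iint (EE 1) (cc 1) 0 (real 0 / real N) (real N / real N) []"
      using castar_F0[OF True] s0 Np by simp
    moreover have "cmod ((\<Sum>i\<in>{0<..N}. Ppoly (EE 1) (cc 1) (Suc 0) ((real i / real N) # [])) / of_nat N
           - Iint (EE 1) (cc 1) 0 (real 0 / real N) (real N / real N) []) \<le> M 1 / real N"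
      unfolding M_def by (rule riemann_poly) (use fE N in auto)
    moreover have "M 1 / real N \<le> 3 * Ms / real N"
      using Mle[of 1] M0[of 1] Np by (intro divide_right_mono) auto
    ultimately show ?thesis using True by simp
  next
    case False
    hence sne: "s \<noteq> []" using s by auto
    show ?thesis
    proof (cases "inI s")
      case False
      have "h i = 0" for i using False inI_cons[of i s] sne unfolding h_def by auto
      thus ?thesis using False \<open>n \<noteq> 0\<close> Rb by simp
    next
      case True
      then obtain m where dm: "dec_inc_at m s" unfolding inI_def by blast
      have mr0: "1 \<le> m \<and> m \<le> length s" using dm unfolding dec_inc_at_def by (elim conjE) (intro conjI)
      have mr: "1 \<le> m" "m \<le> n" using mr0 s by auto
      have dmy: "dec_inc_at m y" unfolding y_def f_def using dm dia_map_div[OF N] by simp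
      define s1 where "s1 = hd s"
      have s1r: "1 \<le> s1" "s1 \<le> N" using s sne unfolding s1_def by auto
      have hy: "hd y = f s1" unfolding y_def s1_def using sne by (simp add: hd_map)
      have n1: "1 \<le> n" using \<open>n \<noteq> 0\<close> by simp
      have cast: "castar g y = (if m = 1 then Iint (EE 1) (cc 1) n 0 (f s1) y else 0) + Iint (EE (Suc m)) (cc (Suc m)) n (f s1) 1 y"
        using castar_F1[OF n1 yl yu dmy] hy by simp
      have allge: "\<forall>j\<in>set s. 1 \<le> j" using s by auto
      have iI: "inI (i # s) \<longleftrightarrow> (s1 < i \<or> (i < s1 \<and> m = 1))" if "i \<in> {1..N}" for i
      proof
        assume a: "inI (i # s)"
        then obtain m' where "dec_inc_at m' (i # s)" unfolding inI_def by blast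
        from dia_cons_D[OF this sne] have "(i < s1 \<and> dec_inc_at 1 s) \<or> s1 < i" unfolding s1_def by auto
        moreover have "dec_inc_at 1 s \<Longrightarrow> m = 1" using dia_unique[OF dm, of 1] by blast
        ultimately show "s1 < i \<or> (i < s1 \<and> m = 1)" by blast
      next
        assume a: "s1 < i \<or> (i < s1 \<and> m = 1)"
        have i1: "\<forall>j\<in>set (i # s). 1 \<le> j" using that allge by auto
        show "inI (i # s)"
        proof (cases "s1 < i")
          case True
          have "dec_inc_at (Suc m) (i # s)" using dia_cons_I2[OF dm] True unfolding s1_def by simp
          thus ?thesis using i1 unfolding inI_def by blast
        next
          case False
          hence "i < s1" "m = 1" using a by auto
          hence "dec_inc_at 1 (i # s)" using dia_cons_I1[of s i] dm sne unfolding s1_def by simp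
          thus ?thesis using i1 unfolding inI_def by blast
        qed
      qed
      let ?GU = "\<lambda>i. Ppoly (EE (Suc m)) (cc (Suc m)) (Suc n) ((real i / real N) # y)"
      let ?GL = "\<lambda>i. Ppoly (EE 1) (cc 1) (Suc n) ((real i / real N) # y)"
      have hU: "h i = ?GU i" if "i \<in> {s1<..N}" for i
      proof -
        have i: "i \<in> {1..N}" "s1 < i" using that s1r by auto
        have "dec_inc_at (Suc m) (f i # y)" using dia_cons_I2[OF dmy] hy i N unfolding f_def
          by (simp add: divide_strict_right_mono)
        hence "g (f i # y) = ?GU i" using gP[of "Suc m" "f i # y"] mr yl yu fu[OF i(1)] unfolding f_def by simp
        thus ?thesis unfolding h_def using iI[OF i(1)] i by simp
      qed
      have hL: "h i = (if m = 1 then ?GL i else 0)" if "i \<in> {1..<s1}" for i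
      proof -
        have i: "i \<in> {1..N}" "i < s1" using that s1r by auto
        show ?thesis
        proof (cases "m = 1")
          case True
          have sy: "y \<noteq> []" using sne unfolding y_def by simp
          have "dec_inc_at 1 (f i # y)" using dia_cons_I1[of y "f i"] dmy True hy i sy N unfolding f_def
            by (simp add: divide_strict_right_mono)
          hence "g (f i # y) = ?GL i" using gP[of 1 "f i # y"] yl yu fu[OF i(1)] unfolding f_def by simp
          thus ?thesis unfolding h_def using iI[OF i(1)] i True by simp
        next
          case False
          thus ?thesis unfolding h_def using iI[OF i(1)] i by simp
        qed
      qed
      have hs1: "h s1 = 0" unfolding h_def using iI[of s1] s1r by simp
      have split: "{1..N} = {1..<s1} \<union> ({s1} \<union> {s1<..N})" using s1r by auto
      have sumh: "(\<Sum>i\<in>{1..N}. h i) = (\<Sum>i\<in>{1..<s1}. h i) + (\<Sum>i\<in>{s1<..N}. h i)"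
        unfolding split by (subst sum.union_disjoint, auto simp: hs1)+
      have sumU: "(\<Sum>i\<in>{s1<..N}. h i) = (\<Sum>i\<in>{s1<..N}. ?GU i)" using hU by simp
      have sumL: "(\<Sum>i\<in>{1..<s1}. h i) = (if m = 1 then (\<Sum>i\<in>{0<..s1}. ?GL i) - ?GL s1 else 0)"
      proof -
        have e1: "{0<..s1} = insert s1 {1..<s1}" using s1r by auto
        have "(\<Sum>i\<in>{1..<s1}. h i) = (\<Sum>i\<in>{1..<s1}. if m = 1 then ?GL i else 0)" using hL by simp
        thus ?thesis unfolding e1 by (simp split: if_splits)
      qed
      define IU where "IU = Iint (EE (Suc m)) (cc (Suc m)) n (real s1 / real N) (real N / real N) y"
      define IL where "IL = Iint (EE 1) (cc 1) n (real 0 / real N) (real s1 / real N) y"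
      have castar2: "castar g y = (if m = 1 then IL else 0) + IU"
        unfolding cast IU_def IL_def f_def using Np by simp
      have bU: "cmod ((\<Sum>i\<in>{s1<..N}. ?GU i) / of_nat N - IU) \<le> M (Suc m) / real N"
        unfolding IU_def M_def by (rule riemann_poly) (use fE mr s1r N yl yu in auto)
      have bL: "cmod ((\<Sum>i\<in>{0<..s1}. ?GL i) / of_nat N - IL) \<le> M 1 / real N"
        unfolding IL_def M_def by (rule riemann_poly) (use fE mr s1r N yl yu in auto)
      have bG: "cmod (?GL s1 / of_nat N) \<le> M 1 / real N"
      proof -
        have "cmod (?GL s1) \<le> M 1" unfolding M_def
          by (rule Ppoly_bound) (use yl yu fu[of s1] s1r in \<open>auto simp: f_def\<close>)
        thus ?thesis using Np by (simp add: norm_divide divide_right_mono)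
      qed
      have eq: "(\<Sum>i\<in>{1..N}. h i) / of_nat N - castar g y
          = ((\<Sum>i\<in>{s1<..N}. ?GU i) / of_nat N - IU)
            + (if m = 1 then ((\<Sum>i\<in>{0<..s1}. ?GL i) / of_nat N - IL) - ?GL s1 / of_nat N else 0)"
        unfolding sumh sumU sumL castar2 by (simp add: add_divide_distrib diff_divide_distrib)
      have "cmod ((\<Sum>i\<in>{1..N}. h i) / of_nat N - castar g y) \<le> M (Suc m) / real N + 2 * M 1 / real N"
      proof (cases "m = 1")
        case True
        have "cmod ((\<Sum>i\<in>{1..N}. h i) / of_nat N - castar g y)
            \<le> cmod ((\<Sum>i\<in>{s1<..N}. ?GU i) / of_nat N - IU)
              + (cmod ((\<Sum>i\<in>{0<..s1}. ?GL i) / of_nat N - IL) + cmod (?GL s1 / of_nat N))"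
          unfolding eq using True by (simp add: norm_triangle_le norm_triangle_ineq4 add_mono)
        thus ?thesis using bU bL bG by simp
      next
        case False
        have "0 \<le> 2 * M 1 / real N" using M0[of 1] Np by simp
        thus ?thesis unfolding eq using bU False by simp
      qed
      also have "\<dots> \<le> 3 * Ms / real N"
      proof -
        have "M (Suc m) + 2 * M 1 \<le> 3 * Ms" using Mle[of "Suc m"] Mle[of 1] mr by simp
        thus ?thesis using Np by (simp add: add_divide_distrib[symmetric] divide_right_mono)
      qed
      finally show ?thesis using True by simp
    qed
  qed
  have V2: "V N n (castar g) s = of_real c * (if n = 0 \<or> inI s then castar g y else 0)"
    unfolding V_def c_def y_def f_def using s by auto
  have "cmod (dastarN N (V N (Suc n) g) s - V N n (castar g) s)
      = c * cmod ((\<Sum>i\<in>{1..N}. h i) / of_nat N - (if n = 0 \<or> inI s then castar g y else 0))"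
  proof -
    let ?X = "(\<Sum>i\<in>{1..N}. h i) / of_nat N" and ?Z = "(if n = 0 \<or> inI s then castar g y else 0)"
    have "dastarN N (V N (Suc n) g) s - V N n (castar g) s = of_real c * (?X - ?Z)"
      unfolding D V2 by (simp only: right_diff_distrib)
    hence "cmod (dastarN N (V N (Suc n) g) s - V N n (castar g) s) = cmod (complex_of_real c) * cmod (?X - ?Z)"
      by (simp only: norm_mult)
    thus ?thesis using c0 by simp
  qed
  also have "\<dots> \<le> c * (3 * Ms / real N)" using goal c0 by (rule mult_left_mono)
  finally show ?thesis unfolding c_def Ms_def M_def .
qed


lemma castar_est: "\<exists>C. \<forall>N\<ge>1. dnorm (\<lambda>t. dastarN N (V N (Suc n) g) t - V N n (castar g) t) \<le> C / real N"
proof (intro exI allI impI)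
  fix N :: nat assume N: "1 \<le> N"
  define Ms where "Ms = (\<Sum>m\<in>{1..Suc n}. \<Sum>e\<in>EE m. cmod (cc m e))"
  define S where "S = {s. set s \<subseteq> {1..N} \<and> length s = n}"
  have finS: "finite S" unfolding S_def by (rule finite_lists_length_eq) simp
  have cardS: "card S = N ^ n" unfolding S_def by (subst card_lists_length_eq) simp_all
  let ?E = "\<lambda>t. dastarN N (V N (Suc n) g) t - V N n (castar g) t"
  have supp: "t \<in> S" if nz: "?E t \<noteq> 0" for t
  proof (cases "dastarN N (V N (Suc n) g) t = 0")
    case False
    hence "(\<Sum>i\<in>{1..N}. if inI (i # t) then V N (Suc n) g (i # t) else 0) \<noteq> 0" unfolding dastarN_eq by auto
    then obtain i where "(if inI (i # t) then V N (Suc n) g (i # t) else 0) \<noteq> 0"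
      using sum.not_neutral_contains_not_neutral by blast
    hence a: "inI (i # t)" "V N (Suc n) g (i # t) \<noteq> 0" by (auto split: if_splits)
    hence "length t = n" "\<forall>j\<in>set t. j \<le> N" unfolding V_def by (auto split: if_splits)
    moreover have "\<forall>j\<in>set t. 1 \<le> j" using inI_ge1[OF a(1)] by auto
    ultimately show ?thesis unfolding S_def by auto
  next
    case True
    hence b: "V N n (castar g) t \<noteq> 0" using nz by auto
    hence l: "length t = n" "n = 0 \<or> inI t" "\<forall>j\<in>set t. j \<le> N" unfolding V_def by (auto split: if_splits)
    have "\<forall>j\<in>set t. 1 \<le> j" using l(1,2) inI_ge1[of t] by auto
    thus ?thesis using l unfolding S_def by auto
  qed
  define B where "B = 1 / sqrt (real N) ^ n * (3 * Ms / real N)"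
  have Ms0: "0 \<le> Ms" unfolding Ms_def by (intro sum_nonneg) simp
  have B0: "0 \<le> B" unfolding B_def using Ms0 by simp
  have bnd: "cmod (?E t) \<le> B" if tS: "t \<in> S" for t
  proof -
    have l: "length t = n" and u: "\<forall>i\<in>set t. 1 \<le> i \<and> i \<le> N" using tS unfolding S_def by auto
    show ?thesis using point_bound[OF N l u] unfolding B_def Ms_def .
  qed
  have "dnorm ?E \<le> sqrt (real (card S)) * B"
    by (rule dnorm_bound[OF finS supp bnd B0]) auto
  also have "sqrt (real (card S)) * B = 3 * Ms / real N"
  proof -
    have "sqrt (real (card S)) = sqrt (real N) ^ n" unfolding cardS by (simp add: real_sqrt_power)
    moreover have "sqrt (real N) > 0" using N by simp
    ultimately show ?thesis unfolding B_def by simp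
  qed
  finally show "dnorm ?E \<le> 3 * Ms / real N" .
qed

end

lemma castar_step:
  assumes "Dp (Suc n) g"
  shows "Dp n (castar g) \<and> (\<exists>C. \<forall>N\<ge>1. dnorm (\<lambda>t. dastarN N (V N (Suc n) g) t - V N n (castar g) t) \<le> C / real N)"
proof -
  from assms have sup: "\<And>xs. g xs \<noteq> 0 \<Longrightarrow> length xs = Suc n \<and> inX xs \<and> (\<forall>x\<in>set xs. 0 \<le> x \<and> x \<le> 1)"
    and pc: "\<And>m. m \<in> {1..Suc n} \<Longrightarrow> \<exists>p. is_poly_fun (Suc n) p \<and>
        (\<forall>xs. length xs = Suc n \<and> dec_inc_at m xs \<and> (\<forall>x\<in>set xs. 0 \<le> x \<and> x \<le> 1) \<longrightarrow> g xs = p xs)"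
    unfolding Dp_def by auto
  have "\<forall>m\<in>{1..Suc n}. \<exists>Ec. finite (fst Ec) \<and> (\<forall>xs. length xs = Suc n \<and> dec_inc_at m xs \<and> (\<forall>x\<in>set xs. 0 \<le> x \<and> x \<le> 1)
          \<longrightarrow> g xs = Ppoly (fst Ec) (snd Ec) (Suc n) xs)"
  proof
    fix m assume "m \<in> {1..Suc n}"
    from pc[OF this] obtain p where p: "is_poly_fun (Suc n) p"
      "\<forall>xs. length xs = Suc n \<and> dec_inc_at m xs \<and> (\<forall>x\<in>set xs. 0 \<le> x \<and> x \<le> 1) \<longrightarrow> g xs = p xs" by blast
    from p(1) obtain E c where "finite E" "\<forall>xs. length xs = Suc n \<longrightarrow> p xs = (\<Sum>e\<in>E. c e * (\<Prod>i<Suc n. of_real (xs ! i) ^ e i))"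
      unfolding is_poly_fun_def by blast
    thus "\<exists>Ec. finite (fst Ec) \<and> (\<forall>xs. length xs = Suc n \<and> dec_inc_at m xs \<and> (\<forall>x\<in>set xs. 0 \<le> x \<and> x \<le> 1)
          \<longrightarrow> g xs = Ppoly (fst Ec) (snd Ec) (Suc n) xs)"
      using p(2) by (intro exI[of _ "(E, c)"]) (simp add: Ppoly_def)
  qed
  from bchoice[OF this] obtain F where F: "\<forall>m\<in>{1..Suc n}. finite (fst (F m)) \<and> (\<forall>xs. length xs = Suc n \<and> dec_inc_at m xs \<and> (\<forall>x\<in>set xs. 0 \<le> x \<and> x \<le> 1)
          \<longrightarrow> g xs = Ppoly (fst (F m)) (snd (F m)) (Suc n) xs)"
    by blast
  define EE where "EE m = fst (F m)" for m
  define cc where "cc m = snd (F m)" for m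
  have fE: "\<And>m. m \<in> {1..Suc n} \<Longrightarrow> finite (EE m)" using F unfolding EE_def by blast
  have gP: "\<And>m xs. m \<in> {1..Suc n} \<Longrightarrow> length xs = Suc n \<Longrightarrow> dec_inc_at m xs \<Longrightarrow> (\<forall>x\<in>set xs. 0 \<le> x \<and> x \<le> 1)
              \<Longrightarrow> g xs = Ppoly (EE m) (cc m) (Suc n) xs" using F unfolding EE_def cc_def by blast
  have "Dp n (castar g)" using sup fE gP by (rule castar_Dp)
  moreover have "\<exists>C. \<forall>N\<ge>1. dnorm (\<lambda>t. dastarN N (V N (Suc n) g) t - V N n (castar g) t) \<le> C / real N"
    using sup fE gP by (rule castar_est)
  ultimately show ?thesis by blast
qed

lemma da_i_add: "da_i i (\<lambda>x. u x + v x) t = da_i i u t + da_i i v t"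
  unfolding da_i_def by (cases t) auto

lemma dastar_i_add: "dastar_i i (\<lambda>x. u x + v x) t = dastar_i i u t + dastar_i i v t"
  unfolding dastar_i_def by auto

lemma daN_add: "daN N (\<lambda>x. u x + v x) = (\<lambda>x. daN N u x + daN N v x)"
  unfolding daN_def by (intro ext) (simp only: da_i_add sum.distrib distrib_left)

lemma dastarN_add: "dastarN N (\<lambda>x. u x + v x) = (\<lambda>x. dastarN N u x + dastarN N v x)"
  unfolding dastarN_def by (intro ext) (simp only: dastar_i_add sum.distrib distrib_left)

lemma opd_add: "opr (daN N) (dastarN N) t (\<lambda>x. u x + v x) = (\<lambda>x. opr (daN N) (dastarN N) t u x + opr (daN N) (dastarN N) t v x)"
  by (induction t arbitrary: u v) (simp_all add: daN_add dastarN_add)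

lemma opd_fsupp: "fsupp u \<Longrightarrow> fsupp (opr (daN N) (dastarN N) t u)"
  by (induction t arbitrary: u) (simp_all add: daN_fsupp dastarN_fsupp)

lemma opd_norm: "fsupp u \<Longrightarrow> 1 \<le> N \<Longrightarrow> dnorm (opr (daN N) (dastarN N) t u) \<le> dnorm u"
proof (induction t arbitrary: u)
  case Lf
  then show ?case by simp
next
  case (Nd a b)
  let ?A = "opr (daN N) (dastarN N) a" and ?B = "opr (daN N) (dastarN N) b"
  have f1: "fsupp (?B u)" using opd_fsupp Nd.prems by blast
  have f2: "fsupp (daN N (?B u))" using daN_fsupp f1 by blast
  have f3: "fsupp (?A (daN N (?B u)))" using opd_fsupp f2 by blast
  have "dnorm (opr (daN N) (dastarN N) (Nd a b) u) = dnorm (dastarN N (?A (daN N (?B u))))" by simp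
  also have "\<dots> \<le> dnorm (?A (daN N (?B u)))" by (rule dastarN_norm[OF f3 Nd.prems(2)])
  also have "\<dots> \<le> dnorm (daN N (?B u))" by (rule Nd.IH(1)[OF f2 Nd.prems(2)])
  also have "\<dots> \<le> dnorm (?B u)" by (rule daN_norm[OF f1 Nd.prems(2)])
  also have "\<dots> \<le> dnorm u" by (rule Nd.IH(2)[OF Nd.prems])
  finally show ?case .
qed

lemma dnorm_zero: "dnorm (\<lambda>x. 0) = 0"
  using dnorm_L2[of "{}" "\<lambda>x. 0"] by simp

lemma tree_main:
  "Dp n g \<Longrightarrow> Dp n (opr ca castar t g) \<and>
     (\<exists>C. \<forall>N\<ge>1. dnorm (\<lambda>x. opr (daN N) (dastarN N) t (V N n g) x - V N n (opr ca castar t g) x) \<le> C / real N)"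
proof (induction t arbitrary: n g)
  case Lf
  have z: "(\<lambda>x. opr (daN N) (dastarN N) Lf (V N n g) x - V N n (opr ca castar Lf g) x) = (\<lambda>x. 0)" for N
    by simp
  have "Dp n (opr ca castar Lf g)" using Lf by simp
  moreover have "\<forall>N\<ge>1. dnorm (\<lambda>x. opr (daN N) (dastarN N) Lf (V N n g) x - V N n (opr ca castar Lf g) x) \<le> 0 / real N"
    unfolding z dnorm_zero by simp
  ultimately show ?case by blast
next
  case (Nd a b)
  define g2 where "g2 = opr ca castar b g"
  obtain C2 where D2: "Dp n g2" and C2: "\<forall>N\<ge>1. dnorm (\<lambda>x. opr (daN N) (dastarN N) b (V N n g) x - V N n g2 x) \<le> C2 / real N"
    using Nd.IH(2)[OF Nd.prems] unfolding g2_def by blast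
  define h where "h = ca g2"
  have Dh: "Dp (Suc n) h" unfolding h_def by (rule ca_Dp[OF D2])
  define g1 where "g1 = opr ca castar a h"
  obtain C1 where D1: "Dp (Suc n) g1" and C1: "\<forall>N\<ge>1. dnorm (\<lambda>x. opr (daN N) (dastarN N) a (V N (Suc n) h) x - V N (Suc n) g1 x) \<le> C1 / real N"
    using Nd.IH(1)[OF Dh] unfolding g1_def by blast
  obtain C3 where D3: "Dp n (castar g1)" and C3: "\<forall>N\<ge>1. dnorm (\<lambda>x. dastarN N (V N (Suc n) g1) x - V N n (castar g1) x) \<le> C3 / real N"
    using castar_step[OF D1] by blast
  have opc: "opr ca castar (Nd a b) g = castar g1" unfolding g1_def h_def g2_def by simp
  show ?case
  proof (intro conjI exI allI impI)
    show "Dp n (opr ca castar (Nd a b) g)" unfolding opc by (rule D3)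
    fix N :: nat assume N: "1 \<le> N"
    let ?A = "opr (daN N) (dastarN N) a" and ?B = "opr (daN N) (dastarN N) b"
    define e2 where "e2 = (\<lambda>x. ?B (V N n g) x - V N n g2 x)"
    define e1 where "e1 = (\<lambda>x. ?A (V N (Suc n) h) x - V N (Suc n) g1 x)"
    define e3 where "e3 = (\<lambda>x. dastarN N (V N (Suc n) g1) x - V N n (castar g1) x)"
    have fe2: "fsupp e2" unfolding e2_def by (intro fsupp_diff opd_fsupp V_fsupp)
    have fe1: "fsupp e1" unfolding e1_def by (intro fsupp_diff opd_fsupp V_fsupp)
    have fe3: "fsupp e3" unfolding e3_def by (intro fsupp_diff dastarN_fsupp V_fsupp)
    have fAe2: "fsupp (?A (daN N e2))" by (intro opd_fsupp daN_fsupp fe2)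
    have w2: "?B (V N n g) = (\<lambda>x. V N n g2 x + e2 x)" unfolding e2_def by (intro ext) simp
    have s1: "daN N (?B (V N n g)) = (\<lambda>x. V N (Suc n) h x + daN N e2 x)"
      unfolding w2 daN_add h_def ca_V[OF D2 N] ..
    have s2: "?A (daN N (?B (V N n g))) = (\<lambda>x. V N (Suc n) g1 x + (e1 x + ?A (daN N e2) x))"
      unfolding s1 opd_add e1_def by (intro ext) simp
    have s3: "dastarN N (?A (daN N (?B (V N n g)))) = (\<lambda>x. V N n (castar g1) x + (e3 x + dastarN N (\<lambda>x. e1 x + ?A (daN N e2) x) x))"
      unfolding s2 dastarN_add e3_def by (intro ext) simp
    have diff: "(\<lambda>x. opr (daN N) (dastarN N) (Nd a b) (V N n g) x - V N n (opr ca castar (Nd a b) g) x)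
        = (\<lambda>x. e3 x + dastarN N (\<lambda>x. e1 x + ?A (daN N e2) x) x)"
      unfolding opc using s3 by (intro ext) simp
    have fs: "fsupp (\<lambda>x. e1 x + ?A (daN N e2) x)" by (rule fsupp_add[OF fe1 fAe2])
    have "dnorm (\<lambda>x. e3 x + dastarN N (\<lambda>x. e1 x + ?A (daN N e2) x) x)
        \<le> dnorm e3 + dnorm (dastarN N (\<lambda>x. e1 x + ?A (daN N e2) x))"
      by (rule dnorm_triangle[OF fe3 dastarN_fsupp[OF fs]])
    also have "\<dots> \<le> dnorm e3 + dnorm (\<lambda>x. e1 x + ?A (daN N e2) x)"
      using dastarN_norm[OF fs N] by simp
    also have "\<dots> \<le> dnorm e3 + (dnorm e1 + dnorm (?A (daN N e2)))"
      using dnorm_triangle[OF fe1 fAe2] by simp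
    also have "\<dots> \<le> dnorm e3 + (dnorm e1 + dnorm e2)"
      using order.trans[OF opd_norm[OF daN_fsupp[OF fe2, of N] N, of a] daN_norm[OF fe2 N]] by simp
    also have "\<dots> \<le> C3 / real N + (C1 / real N + C2 / real N)"
      using C1 C2 C3 N unfolding e1_def e2_def e3_def by (intro add_mono) auto
    also have "\<dots> = (C3 + C1 + C2) / real N" by (simp add: add_divide_distrib)
    finally show "dnorm (\<lambda>x. opr (daN N) (dastarN N) (Nd a b) (V N n g) x - V N n (opr ca castar (Nd a b) g) x)
        \<le> (C3 + C1 + C2) / real N" unfolding diff .
  qed
qed

theorem mainTheorem17:
  fixes \<pi> :: "nat set set" and k :: nat
  assumes "ncpp k \<pi>"
  shows "(\<exists>C. \<forall>N\<ge>1. dnorm (\<lambda>t. a_disc N \<pi> Omega t - phi (a_cont \<pi>) * Omega t) \<le> C / real N)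
    \<and> (\<forall>n g. n \<ge> 1 \<and> inD n g \<longrightarrow>
         (\<exists>C. \<forall>N\<ge>1. dnorm (\<lambda>t. a_disc N \<pi> (vN N n g) t - vN N n (a_cont \<pi> g) t) \<le> C / real N))"
proof -
  obtain t where t: "prt t = \<pi>" using ncpp_tree[OF assms] by blast
  have ad: "a_disc N \<pi> = opr (daN N) (dastarN N) t" for N unfolding a_disc_def t[symmetric] by (rule word_op_tree)
  have ac: "a_cont \<pi> = opr ca castar t" unfolding a_cont_def t[symmetric] by (rule word_op_tree)
  have DL: "Dp 0 Lambda" unfolding Dp_def Lambda_def by auto
  have VL: "V N 0 Lambda = Omega" for N unfolding V0 Omega_def Lambda_def by (intro ext) simp
  from tree_main[OF DL, of t] obtain C where
    D0: "Dp 0 (opr ca castar t Lambda)" and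
    C: "\<forall>N\<ge>1. dnorm (\<lambda>x. opr (daN N) (dastarN N) t (V N 0 Lambda) x - V N 0 (opr ca castar t Lambda) x) \<le> C / real N"
    by blast
  have V0c: "V N 0 (opr ca castar t Lambda) x = phi (a_cont \<pi>) * Omega x" for N x
    unfolding V0 phi_def ac Omega_def by simp
  have part1: "\<exists>C. \<forall>N\<ge>1. dnorm (\<lambda>t. a_disc N \<pi> Omega t - phi (a_cont \<pi>) * Omega t) \<le> C / real N"
  proof -
    have eq: "(\<lambda>x. a_disc N \<pi> Omega x - phi (a_cont \<pi>) * Omega x)
       = (\<lambda>x. opr (daN N) (dastarN N) t (V N 0 Lambda) x - V N 0 (opr ca castar t Lambda) x)" for N
      unfolding ad VL V0c ..
    show ?thesis unfolding eq using C by blast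
  qed
  have part2: "\<exists>C. \<forall>N\<ge>1. dnorm (\<lambda>t. a_disc N \<pi> (vN N n g) t - vN N n (a_cont \<pi> g) t) \<le> C / real N"
    if "n \<ge> 1 \<and> inD n g" for n g
  proof -
    have n1: "1 \<le> n" and Dg: "Dp n g" using that inD_Dp by auto
    from tree_main[OF Dg, of t] obtain C where
      "\<forall>N\<ge>1. dnorm (\<lambda>x. opr (daN N) (dastarN N) t (V N n g) x - V N n (opr ca castar t g) x) \<le> C / real N"
      by blast
    thus ?thesis unfolding ad ac V_vN[OF n1] by blast
  qed
  show ?thesis using part1 part2 by blast
qed

end
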